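(* Under the empirical-coordination polar coding scheme described in the context, for every $\epsilon>0$, $$\mathbb{P}\Big[\mathbb{V}\big(q_{XY},T_{X_{1:k}^{1:N}\widetilde Y_{1:k}^{1:N}}\big)>\epsilon\Big]\le k\Big(\sqrt{2\log2}\sqrt{N\delta_N}+2|\mathcal{X}||\mathcal{Y}|e^{-N\epsilon^2/(2|\mathcal{X}|^2|\mathcal{Y}|^2)}\Big)=O\big(k\sqrt{N\delta_N}\big),$$ where $T_{X_{1:k}^{1:N}\widetilde Y_{1:k}^{1:N}}$ is the joint histogram of the concatenated length-$kN$ sequences of all blocks.
   Context: All logarithms are base 2. $\mathbb{V}(p,q)=\sum_x|p(x)-q(x)|$. For sequences $(x^{1:m},y^{1:m})$, the joint histogram is $T(x,y)=\frac1m\sum_{l=1}^m\mathds{1}\{(x^l,y^l)=(x,y)\}$. For a vector $a^{1:N}$ and index set $\mathcal{A}$, $a^{1:N}[\mathcal{A}]$ is the subvector indexed by $\mathcal{A}$. Setting (empirical coordination scheme): Let $\mathcal{X},\mathcal{Y}$ be finite alphabets with $|\mathcal{Y}|$ prime, identified with $\mathbb{F}_{|\mathcal{Y}|}$, and $q_{XY}$ a target joint distribution. Let $N=2^n$, $G_n=\begin{bmatrix}1&0\\1&1\end{bmatrix}^{\otimes n}$ over $\mathbb{F}_{|\mathcal{Y}|}$, $(X^{1:N},Y^{1:N})$ i.i.d. $q_{XY}$, and $U^{1:N}=Y^{1:N}G_n$. Fix $\beta\in(0,1/2)$, $\delta_N=2^{-N^\beta}$, and $\mathcal{H}_Y=\{j: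 H(U^j|U^{1:j-1})>\delta_N\}$, $\mathcal{V}_{Y|X}=\{j: H(U^j|U^{1:j-1}X^{1:N})>\log|\mathcal{Y}|-\delta_N\}$. Node 1 observes, in each block $i\in\{1,\dots,k\}$, $X_i^{1:N}$ i.i.d. $q_X$ (independent across blocks). Common randomness $C_1$ uniform on $\mathcal{Y}^{|\mathcal{V}_{Y|X}|}$ is shared by both nodes. In block $i$, Node 1 sets $\widetilde U_i^{1:N}[\mathcal{V}_{Y|X}]=C_1$ and, for the remaining indices $j$ in increasing order, draws $\widetilde U_i^j$ according to $q_{U^j|U^{1:j-1}X^{1:N}}(\cdot|\widetilde U_i^{1:j-1},X_i^{1:N})$ if $j\in\mathcal{H}_Y\setminus\mathcal{V}_{Y|X}$ and according to $q_{U^j|U^{1:j-1}}(\cdot|\widetilde U_i^{1:j-1})$ if $j\notin\mathcal{H}_Y$. Node 1 sends $M_i=\widetilde U_i^{1:N}[\mathcal{H}_Y\setminus\mathcal{V}_{Y|X}]$ and the randomness $\widetilde C_i$ used for $\widetilde U_i^{1:N}[\mathcal{H}_Y^c]$; Node 2 reconstructs $\widetilde U_i^{1:N}$ and outputs $\widetilde Y_i^{1:N}=\widetilde U_i^{1:N}G_n$. *)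

theory Defs
  imports "HOL-Probability.Probability" "HOL-Library.Landau_Symbols"
begin

(* Alphabet Y = F_p is represented by {..<p} :: nat set (arithmetic mod p).
   Sequences of length N = 2^n are lists, indices 0..N-1 (paper: 1..N). *)

(* Entries of G_n = F^{\<otimes>n}, F = [[1,0],[1,1]], indices i,j < 2^n *)
fun kron_G :: "nat \<Rightarrow> nat \<Rightarrow> nat \<Rightarrow> nat" where
  "kron_G 0 i j = 1"
| "kron_G (Suc n) i j =
     (if i < 2^n then (if j < 2^n then kron_G n i j else 0)
      else (if j < 2^n then kron_G n (i - 2^n) j else kron_G n (i - 2^n) (j - 2^n)))"

definition polar :: "nat \<Rightarrow> nat \<Rightarrow> nat list \<Rightarrow> nat list" where
  "polar p n y = map (\<lambda>j. (\<Sum>i<2^n. y ! i * kron_G n i j) mod p) [0..<2^n]"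

definition polar_inv :: "nat \<Rightarrow> nat \<Rightarrow> nat list \<Rightarrow> nat list" where
  "polar_inv p n u = (THE y. length y = 2^n \<and> set y \<subseteq> {..<p} \<and> polar p n y = u)"

definition XU_pmf :: "nat \<Rightarrow> nat \<Rightarrow> ('x \<times> nat) pmf \<Rightarrow> ('x list \<times> nat list) pmf" where
  "XU_pmf p n q = map_pmf (\<lambda>xy. (map fst xy, polar p n (map snd xy))) (replicate_pmf (2^n) q)"

definition cond_entropy :: "('a \<times> 'b) pmf \<Rightarrow> real" where
  "cond_entropy J = measure_pmf.expectation J
      (\<lambda>(a,b). - log 2 (pmf J (a,b) / pmf (map_pmf snd J) b))"

definition condl :: "'a pmf \<Rightarrow> ('a \<times> 'b) pmf \<Rightarrow> 'b \<Rightarrow> 'a pmf" where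
  "condl d J b = (if b \<in> set_pmf (map_pmf snd J)
                   then map_pmf fst (cond_pmf J {ab. snd ab = b}) else d)"

definition delta :: "nat \<Rightarrow> real \<Rightarrow> real" where
  "delta N \<beta> = 2 powr (- (real N powr \<beta>))"

definition JU :: "nat \<Rightarrow> nat \<Rightarrow> ('x \<times> nat) pmf \<Rightarrow> nat \<Rightarrow> (nat \<times> nat list) pmf" where
  "JU p n q j = map_pmf (\<lambda>(x,u). (u ! j, take j u)) (XU_pmf p n q)"

definition JUX :: "nat \<Rightarrow> nat \<Rightarrow> ('x \<times> nat) pmf \<Rightarrow> nat \<Rightarrow> (nat \<times> (nat list \<times> 'x list)) pmf" where
  "JUX p n q j = map_pmf (\<lambda>(x,u). (u ! j, (take j u, x))) (XU_pmf p n q)"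

definition H_Y :: "nat \<Rightarrow> nat \<Rightarrow> ('x \<times> nat) pmf \<Rightarrow> real \<Rightarrow> nat set" where
  "H_Y p n q \<beta> = {j. j < 2^n \<and> cond_entropy (JU p n q j) > delta (2^n) \<beta>}"

definition V_YX :: "nat \<Rightarrow> nat \<Rightarrow> ('x \<times> nat) pmf \<Rightarrow> real \<Rightarrow> nat set" where
  "V_YX p n q \<beta> = {j. j < 2^n \<and> cond_entropy (JUX p n q j) > log 2 (real p) - delta (2^n) \<beta>}"

(* Node 1's encoder for one block: produces the first j symbols of \<tilde>U, given common
   randomness c (defined on V_YX) and the block's source sequence x *)
fun encode :: "nat \<Rightarrow> nat \<Rightarrow> ('x \<times> nat) pmf \<Rightarrow> real \<Rightarrow> (nat \<Rightarrow> nat) \<Rightarrow> 'x list \<Rightarrow> nat \<Rightarrow> nat list pmf" where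
  "encode p n q \<beta> c x 0 = return_pmf []"
| "encode p n q \<beta> c x (Suc j) = do {
      pre \<leftarrow> encode p n q \<beta> c x j;
      uj \<leftarrow> (if j \<in> V_YX p n q \<beta> then return_pmf (c j)
             else if j \<in> H_Y p n q \<beta> then condl (pmf_of_set {..<p}) (JUX p n q j) (pre, x)
             else condl (pmf_of_set {..<p}) (JU p n q j) pre);
      return_pmf (pre @ [uj]) }"

(* one block: X_i ~ q_X i.i.d., \<tilde>U_i from the encoder, Node 2 outputs \<tilde>Y_i = \<tilde>U_i G_n^{-1} *)
definition block :: "nat \<Rightarrow> nat \<Rightarrow> ('x \<times> nat) pmf \<Rightarrow> real \<Rightarrow> (nat \<Rightarrow> nat) \<Rightarrow> ('x list \<times> nat list) pmf" where
  "block p n q \<beta> c = do {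
      x \<leftarrow> replicate_pmf (2^n) (map_pmf fst q);
      u \<leftarrow> encode p n q \<beta> c x (2^n);
      return_pmf (x, polar_inv p n u) }"

definition scheme :: "nat \<Rightarrow> nat \<Rightarrow> ('x \<times> nat) pmf \<Rightarrow> real \<Rightarrow> nat \<Rightarrow> ('x list \<times> nat list) list pmf" where
  "scheme p n q \<beta> k = do {
      c \<leftarrow> pmf_of_set (PiE (V_YX p n q \<beta>) (\<lambda>_. {..<p}));
      replicate_pmf k (block p n q \<beta> c) }"

definition hist :: "'a list \<Rightarrow> 'b list \<Rightarrow> 'a \<times> 'b \<Rightarrow> real" where
  "hist xs ys ab = real (card {l. l < length xs \<and> (xs ! l, ys ! l) = ab}) / real (length xs)"

definition tv :: "nat \<Rightarrow> ('x::finite \<times> nat) pmf \<Rightarrow> ('x \<times> nat \<Rightarrow> real) \<Rightarrow> real" where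
  "tv p q T = (\<Sum>a\<in>(UNIV::'x set). \<Sum>b<p. \<bar>pmf q (a,b) - T (a,b)\<bar>)"

definition bound_rhs :: "nat \<Rightarrow> nat \<Rightarrow> nat \<Rightarrow> real \<Rightarrow> nat \<Rightarrow> real \<Rightarrow> real" where
  "bound_rhs cx p n \<beta> k \<epsilon> = real k * (sqrt (2 * ln 2) * sqrt (2^n * delta (2^n) \<beta>)
      + 2 * real cx * real p * exp (- (2^n * \<epsilon>\<^sup>2) / (2 * (real cx)\<^sup>2 * (real p)\<^sup>2)))"

end

theory Submission
  imports Defs
begin


lemma kron_G_diag: "i < 2^n \<Longrightarrow> kron_G n i i = 1"
  by (induction n arbitrary: i) auto

lemma kron_G_upper: "i < j \<Longrightarrow> j < 2^n \<Longrightarrow> kron_G n i j = 0"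
proof (induction n arbitrary: i j)
  case 0 then show ?case by simp
next
  case (Suc n)
  show ?case
  proof (cases "i < 2^n")
    case True
    then show ?thesis using Suc by auto
  next
    case False
    then have "\<not> j < 2^n" using Suc.prems by auto
    then show ?thesis using Suc False by auto
  qed
qed

definition VL :: "nat \<Rightarrow> nat \<Rightarrow> nat list set" where
  "VL p N = {y. length y = N \<and> set y \<subseteq> {..<p}}"

lemma finite_VL: "finite (VL p N)"
proof -
  have "VL p N \<subseteq> {xs. set xs \<subseteq> {..<p} \<and> length xs = N}" by (auto simp: VL_def)
  moreover have "finite {xs. set xs \<subseteq> {..<p} \<and> length xs = N}"
    by (rule finite_lists_length_eq) simp
  ultimately show ?thesis by (rule finite_subset)
qed

lemma VL_nth: "y \<in> VL p N \<Longrightarrow> i < N \<Longrightarrow> y ! i < p"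
  unfolding VL_def using nth_mem by fastforce

lemma polar_nth: "j < 2^n \<Longrightarrow> polar p n y ! j = (\<Sum>i<2^n. y ! i * kron_G n i j) mod p"
  by (simp add: polar_def)

lemma length_polar[simp]: "length (polar p n y) = 2^n"
  by (simp add: polar_def)

lemma polar_VL: "0 < p \<Longrightarrow> polar p n y \<in> VL p (2^n)"
  by (auto simp: VL_def polar_def)

lemma polar_sum_split:
  assumes "m < 2^n"
  shows "(\<Sum>i<2^n. y ! i * kron_G n i m) = y ! m + (\<Sum>i<2^n. if m < i then y ! i * kron_G n i m else 0)"
proof -
  have "(\<Sum>i<2^n. y ! i * kron_G n i m) = (\<Sum>i<2^n. (if i = m then y ! m else 0) + (if m < i then y ! i * kron_G n i m else 0))"
    using assms by (intro sum.cong) (auto simp: kron_G_diag kron_G_upper)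
  also have "\<dots> = y ! m + (\<Sum>i<2^n. if m < i then y ! i * kron_G n i m else 0)"
    using assms by (simp add: sum.distrib)
  finally show ?thesis .
qed

lemma polar_inj: "inj_on (polar p n) (VL p (2^n))"
proof (rule inj_onI, rule ccontr)
  fix y y' assume y: "y \<in> VL p (2^n)" and y': "y' \<in> VL p (2^n)"
    and eq: "polar p n y = polar p n y'" and ne: "y \<noteq> y'"
  define D where "D = {i. i < 2^n \<and> y ! i \<noteq> y' ! i}"
  have "D \<noteq> {}" using y y' ne by (auto simp: VL_def D_def intro: nth_equalityI)
  moreover have fD: "finite D" by (simp add: D_def)
  ultimately have mD: "Max D \<in> D" by simp
  define m where "m = Max D"
  have m: "m < 2^n" "y ! m \<noteq> y' ! m" using mD by (auto simp: D_def m_def)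
  have above: "y ! i = y' ! i" if "m < i" "i < 2^n" for i
  proof (rule ccontr)
    assume "y ! i \<noteq> y' ! i"
    then have "i \<in> D" using that by (simp add: D_def)
    then have "i \<le> m" using fD by (simp add: m_def)
    then show False using that by simp
  qed
  define T where "T = (\<Sum>i<2^n. if m < i then y ! i * kron_G n i m else 0)"
  have T': "T = (\<Sum>i<2^n. if m < i then y' ! i * kron_G n i m else 0)"
    unfolding T_def by (intro sum.cong) (auto simp: above)
  have "(y ! m + T) mod p = (y' ! m + T) mod p"
    using arg_cong[OF eq, of "\<lambda>u. u ! m"] m(1)
    by (simp add: polar_nth polar_sum_split T_def T'[symmetric])
  then have "y ! m mod p = y' ! m mod p"
    by (simp add: nat_mod_eq_iff)
  moreover have "y ! m < p" "y' ! m < p" using VL_nth[OF y m(1)] VL_nth[OF y' m(1)] by auto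
  ultimately show False using m(2) by simp
qed

lemma polar_image: "0 < p \<Longrightarrow> polar p n ` VL p (2^n) = VL p (2^n)"
proof -
  assume p: "0 < p"
  have sub: "polar p n ` VL p (2^n) \<subseteq> VL p (2^n)" using polar_VL[OF p] by auto
  have "card (polar p n ` VL p (2^n)) = card (VL p (2^n))"
    using polar_inj by (rule card_image)
  then show ?thesis using card_subset_eq[OF finite_VL sub] by simp
qed

lemma polar_inv_polar: "y \<in> VL p (2^n) \<Longrightarrow> polar_inv p n (polar p n y) = y"
  unfolding polar_inv_def
  by (rule the_equality) (auto simp: VL_def dest: inj_onD[OF polar_inj])

lemma polar_inv_VL: "0 < p \<Longrightarrow> u \<in> VL p (2^n) \<Longrightarrow> polar_inv p n u \<in> VL p (2^n)"
proof -
  assume p: "0 < p" and u: "u \<in> VL p (2^n)"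
  then obtain y where y: "y \<in> VL p (2^n)" "u = polar p n y"
    using polar_image[OF p] by blast
  then show ?thesis by (simp add: polar_inv_polar)
qed


lemma map_replicate_pmf: "map_pmf (map f) (replicate_pmf m r) = replicate_pmf m (map_pmf f r)"
proof (induction m)
  case 0 then show ?case by simp
next
  case (Suc m)
  have "map_pmf (map f) (replicate_pmf (Suc m) r) =
        bind_pmf r (\<lambda>x. map_pmf (map f) (map_pmf ((#) x) (replicate_pmf m r)))"
    by (simp add: map_bind_pmf map_pmf_def[symmetric])
  also have "\<dots> = bind_pmf r (\<lambda>x. map_pmf ((#) (f x)) (map_pmf (map f) (replicate_pmf m r)))"
    by (simp add: map_pmf_comp)
  also have "\<dots> = replicate_pmf (Suc m) (map_pmf f r)"
    by (simp add: Suc.IH bind_map_pmf map_pmf_def[symmetric])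
  finally show ?case .
qed

definition PX :: "nat \<Rightarrow> ('x \<times> nat) pmf \<Rightarrow> 'x list pmf" where
  "PX n q = replicate_pmf (2^n) (map_pmf fst q)"

definition Kd :: "nat \<Rightarrow> nat \<Rightarrow> ('x \<times> nat) pmf \<Rightarrow> real \<Rightarrow> (nat \<Rightarrow> nat) \<Rightarrow> 'x list \<Rightarrow> nat list \<Rightarrow> nat \<Rightarrow> nat pmf" where
  "Kd p n q \<beta> c x pre j = (if j \<in> V_YX p n q \<beta> then return_pmf (c j)
             else if j \<in> H_Y p n q \<beta> then condl (pmf_of_set {..<p}) (JUX p n q j) (pre, x)
             else condl (pmf_of_set {..<p}) (JU p n q j) pre)"

lemma encode_Suc': "encode p n q \<beta> c x (Suc j) =
   bind_pmf (encode p n q \<beta> c x j) (\<lambda>pre. map_pmf (\<lambda>a. pre @ [a]) (Kd p n q \<beta> c x pre j))"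
  by (simp add: Kd_def map_pmf_def)

lemma pmf_snoc_map:
  "pmf (map_pmf (\<lambda>a. pre @ [a]) K) u = (if u \<noteq> [] \<and> pre = butlast u then pmf K (last u) else 0)"
proof (cases "u \<noteq> [] \<and> pre = butlast u")
  case True
  then have u: "u = pre @ [last u]" by simp
  have "pmf (map_pmf (\<lambda>a. pre @ [a]) K) (pre @ [last u]) = pmf K (last u)"
    by (rule pmf_map_inj') (simp add: inj_def)
  then show ?thesis using True u by metis
next
  case False
  then have "u \<notin> (\<lambda>a. pre @ [a]) ` set_pmf K" by auto
  then have "pmf (map_pmf (\<lambda>a. pre @ [a]) K) u = 0" by (rule pmf_map_outside)
  then show ?thesis using False by auto
qed

lemma pmf_encode:
  "pmf (encode p n q \<beta> c x m) u =
     (if length u = m then (\<Prod>j<m. pmf (Kd p n q \<beta> c x (take j u) j) (u ! j)) else 0)"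
proof (induction m arbitrary: u)
  case 0
  then show ?case by (simp add: indicator_def)
next
  case (Suc m)
  have "pmf (encode p n q \<beta> c x (Suc m)) u =
     (\<integral>pre. pmf (map_pmf (\<lambda>a. pre @ [a]) (Kd p n q \<beta> c x pre m)) u \<partial>measure_pmf (encode p n q \<beta> c x m))"
    unfolding encode_Suc' pmf_bind by (rule refl)
  also have "\<dots> = (\<Sum>pre\<in>{butlast u}. pmf (map_pmf (\<lambda>a. pre @ [a]) (Kd p n q \<beta> c x pre m)) u * pmf (encode p n q \<beta> c x m) pre)"
    by (rule integral_measure_pmf_real) (auto simp: pmf_snoc_map split: if_splits)
  also have "\<dots> = (if length u = Suc m then (\<Prod>j<Suc m. pmf (Kd p n q \<beta> c x (take j u) j) (u ! j)) else 0)"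
  proof (cases "length u = Suc m")
    case True
    then have ne: "u \<noteq> []" by auto
    have bl: "butlast u = take m u" using True by (simp add: butlast_conv_take)
    have lst: "last u = u ! m" using True ne by (simp add: last_conv_nth)
    have "(\<Prod>j<m. pmf (Kd p n q \<beta> c x (take j (butlast u)) j) (butlast u ! j)) =
          (\<Prod>j<m. pmf (Kd p n q \<beta> c x (take j u) j) (u ! j))"
      using True by (intro prod.cong) (auto simp: bl)
    then show ?thesis using True ne Suc.IH[of "butlast u"]
      by (simp add: pmf_snoc_map bl[symmetric] lst[symmetric] mult.commute)
  next
    case False
    then show ?thesis using Suc.IH[of "butlast u"] by (auto simp: pmf_snoc_map)
  qed
  finally show ?case .
qed


definition Kn :: "nat \<Rightarrow> nat \<Rightarrow> ('x \<times> nat) pmf \<Rightarrow> real \<Rightarrow> 'x list \<Rightarrow> nat list \<Rightarrow> nat \<Rightarrow> nat pmf" where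
  "Kn p n q \<beta> x pre j = (if j \<in> H_Y p n q \<beta> then condl (pmf_of_set {..<p}) (JUX p n q j) (pre, x)
             else condl (pmf_of_set {..<p}) (JU p n q j) pre)"

definition Cset :: "nat \<Rightarrow> nat \<Rightarrow> ('x \<times> nat) pmf \<Rightarrow> real \<Rightarrow> (nat \<Rightarrow> nat) set" where
  "Cset p n q \<beta> = PiE (V_YX p n q \<beta>) (\<lambda>_. {..<p})"

definition Mu :: "nat \<Rightarrow> nat \<Rightarrow> ('x \<times> nat) pmf \<Rightarrow> real \<Rightarrow> ('x list \<times> nat list) pmf" where
  "Mu p n q \<beta> = bind_pmf (pmf_of_set (Cset p n q \<beta>)) (\<lambda>c. bind_pmf (PX n q)
      (\<lambda>x. map_pmf (\<lambda>u. (x, u)) (encode p n q \<beta> c x (2^n))))"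

lemma V_sub: "V_YX p n q \<beta> \<subseteq> {..<2^n}"
  unfolding V_YX_def by blast

lemma finite_V: "finite (V_YX p n q \<beta>)"
  by (rule finite_subset[OF V_sub]) simp

lemma finite_Cset: "finite (Cset p n q \<beta>)"
  unfolding Cset_def by (intro finite_PiE finite_V) auto

lemma card_Cset: "card (Cset p n q \<beta>) = p ^ card (V_YX p n q \<beta>)"
  unfolding Cset_def by (simp add: card_PiE finite_V)

lemma Cset_ne: "0 < p \<Longrightarrow> Cset p n q \<beta> \<noteq> {}"
proof -
  assume p: "0 < p"
  have "(\<lambda>j\<in>V_YX p n q \<beta>. 0) \<in> Cset p n q \<beta>" unfolding Cset_def restrict_PiE_iff using p by simp
  then show ?thesis by blast
qed

lemma Kd_alt: "Kd p n q \<beta> c x pre j = (if j \<in> V_YX p n q \<beta> then return_pmf (c j) else Kn p n q \<beta> x pre j)"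
  unfolding Kd_def Kn_def by (rule refl)

lemma prod_indic: "finite A \<Longrightarrow> (\<Prod>j\<in>A. if P j then 1 else (0::real)) = (if \<forall>j\<in>A. P j then 1 else 0)"
  by (induction A rule: finite_induct) auto

lemma sum_C_indic:
  assumes "\<forall>j\<in>V_YX p n q \<beta>. u ! j < p"
  shows "(\<Sum>c\<in>Cset p n q \<beta>. \<Prod>j\<in>V_YX p n q \<beta>. pmf (return_pmf (c j)) (u ! j)) = (1::real)"
proof -
  let ?V = "V_YX p n q \<beta>"
  define c0 where "c0 = restrict (\<lambda>j. u ! j) ?V"
  have c0: "c0 \<in> Cset p n q \<beta>" unfolding c0_def Cset_def restrict_PiE_iff using assms by simp
  have "(\<Sum>c\<in>Cset p n q \<beta>. \<Prod>j\<in>?V. pmf (return_pmf (c j)) (u ! j)) =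
        (\<Sum>c\<in>Cset p n q \<beta>. if c = c0 then 1 else 0)"
  proof (intro sum.cong refl)
    fix c assume c: "c \<in> Cset p n q \<beta>"
    have iff: "(\<forall>j\<in>?V. c j = u ! j) \<longleftrightarrow> c = c0"
    proof
      assume H: "\<forall>j\<in>?V. c j = u ! j"
      show "c = c0"
      proof (rule ext)
        fix j show "c j = c0 j"
        proof (cases "j \<in> ?V")
          case True then show ?thesis using H by (simp add: c0_def)
        next
          case False then show ?thesis using PiE_arb[OF c[unfolded Cset_def] False] by (simp add: c0_def)
        qed
      qed
    qed (simp add: c0_def)
    have "(\<Prod>j\<in>?V. pmf (return_pmf (c j)) (u ! j)) = (\<Prod>j\<in>?V. if c j = u ! j then 1 else 0)"
      by (intro prod.cong) (auto simp: indicator_def)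
    also have "\<dots> = (if \<forall>j\<in>?V. c j = u ! j then 1 else 0)" by (rule prod_indic[OF finite_V])
    also have "\<dots> = (if c = c0 then 1 else 0)"
      by (simp only: iff)
    finally show "(\<Prod>j\<in>?V. pmf (return_pmf (c j)) (u ! j)) = (if c = c0 then 1 else 0)" .
  qed
  also have "\<dots> = 1" using c0 finite_Cset[of p n q \<beta>] by (simp add: sum.delta)
  finally show ?thesis .
qed

lemma sum_C_encode:
  assumes "length u = 2^n" "\<forall>j\<in>V_YX p n q \<beta>. u ! j < p"
  shows "(\<Sum>c\<in>Cset p n q \<beta>. pmf (encode p n q \<beta> c x (2^n)) u) =
    (\<Prod>j\<in>{..<2^n} - V_YX p n q \<beta>. pmf (Kn p n q \<beta> x (take j u) j) (u ! j))"
proof -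
  let ?V = "V_YX p n q \<beta>"
  let ?R = "\<Prod>j\<in>{..<2^n} - ?V. pmf (Kn p n q \<beta> x (take j u) j) (u ! j)"
  have "(\<Sum>c\<in>Cset p n q \<beta>. pmf (encode p n q \<beta> c x (2^n)) u) =
        (\<Sum>c\<in>Cset p n q \<beta>. (\<Prod>j\<in>?V. pmf (return_pmf (c j)) (u ! j)) * ?R)"
  proof (intro sum.cong refl)
    fix c
    have "pmf (encode p n q \<beta> c x (2^n)) u = (\<Prod>j<2^n. pmf (Kd p n q \<beta> c x (take j u) j) (u ! j))"
      unfolding pmf_encode using assms(1) by (rule if_P)
    also have "\<dots> = (\<Prod>j\<in>?V. pmf (Kd p n q \<beta> c x (take j u) j) (u ! j)) *
                     (\<Prod>j\<in>{..<2^n} - ?V. pmf (Kd p n q \<beta> c x (take j u) j) (u ! j))"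
      by (subst prod.subset_diff[OF V_sub finite_lessThan]) (rule mult.commute)
    also have "\<dots> = (\<Prod>j\<in>?V. pmf (return_pmf (c j)) (u ! j)) * ?R"
      by (rule arg_cong2[where f="(*)"]; rule prod.cong; simp add: Kd_alt)
    finally show "pmf (encode p n q \<beta> c x (2^n)) u = (\<Prod>j\<in>?V. pmf (return_pmf (c j)) (u ! j)) * ?R" .
  qed
  also have "\<dots> = ?R"
    by (simp only: sum_distrib_right[symmetric] sum_C_indic[OF assms(2)] mult_1)
  finally show ?thesis .
qed

lemma pmf_Mu:
  assumes p: "0 < p" and "length u = 2^n" "\<forall>j\<in>V_YX p n q \<beta>. u ! j < p"
  shows "pmf (Mu p n q \<beta>) (x, u) = pmf (PX n q) x *
    (\<Prod>j\<in>{..<2^n} - V_YX p n q \<beta>. pmf (Kn p n q \<beta> x (take j u) j) (u ! j)) / real p ^ card (V_YX p n q \<beta>)"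
proof -
  have inner: "pmf (bind_pmf (PX n q) (\<lambda>x'. map_pmf (\<lambda>u'. (x', u')) (encode p n q \<beta> c x' (2^n)))) (x, u)
      = pmf (PX n q) x * pmf (encode p n q \<beta> c x (2^n)) u" for c
  proof -
    have "pmf (bind_pmf (PX n q) (\<lambda>x'. map_pmf (\<lambda>u'. (x', u')) (encode p n q \<beta> c x' (2^n)))) (x, u)
       = (\<Sum>x'\<in>{x}. pmf (map_pmf (\<lambda>u'. (x', u')) (encode p n q \<beta> c x' (2^n))) (x, u) * pmf (PX n q) x')"
      unfolding pmf_bind
    proof (rule integral_measure_pmf_real)
      fix a assume "pmf (map_pmf (\<lambda>u'. (a, u')) (encode p n q \<beta> c a (2^n))) (x, u) \<noteq> 0"
      moreover have "a \<noteq> x \<Longrightarrow> pmf (map_pmf (\<lambda>u'. (a, u')) (encode p n q \<beta> c a (2^n))) (x, u) = 0"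
        by (rule pmf_map_outside) auto
      ultimately show "a \<in> {x}" by auto
    qed simp
    also have "\<dots> = pmf (PX n q) x * pmf (encode p n q \<beta> c x (2^n)) u"
    proof -
      have "pmf (map_pmf (Pair x) (encode p n q \<beta> c x (2^n))) (Pair x u) = pmf (encode p n q \<beta> c x (2^n)) u"
        by (rule pmf_map_inj') (simp add: inj_on_def)
      then show ?thesis by (simp only: sum.insert finite.emptyI empty_iff not_False_eq_True sum.empty add_0_right mult.commute)
    qed
    finally show ?thesis .
  qed
  have "pmf (Mu p n q \<beta>) (x, u) = (\<integral>c. pmf (bind_pmf (PX n q) (\<lambda>x'. map_pmf (\<lambda>u'. (x', u')) (encode p n q \<beta> c x' (2^n)))) (x, u) \<partial>measure_pmf (pmf_of_set (Cset p n q \<beta>)))"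
    unfolding Mu_def by (rule pmf_bind)
  also have "\<dots> = (\<Sum>c\<in>Cset p n q \<beta>. pmf (PX n q) x * pmf (encode p n q \<beta> c x (2^n)) u) / card (Cset p n q \<beta>)"
    by (simp only: integral_pmf_of_set[OF Cset_ne[OF p] finite_Cset] inner)
  also have "\<dots> = pmf (PX n q) x *
    (\<Prod>j\<in>{..<2^n} - V_YX p n q \<beta>. pmf (Kn p n q \<beta> x (take j u) j) (u ! j)) / real p ^ card (V_YX p n q \<beta>)"
    unfolding sum_distrib_left[symmetric] sum_C_encode[OF assms(2,3)] card_Cset of_nat_power by (rule refl)
  finally show ?thesis .
qed


definition G :: "nat \<Rightarrow> nat \<Rightarrow> ('x \<times> nat) pmf \<Rightarrow> nat \<Rightarrow> 'x list \<times> nat list \<Rightarrow> real" where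
  "G p n q j \<omega> = measure_pmf.prob (XU_pmf p n q) {\<omega>'. fst \<omega>' = fst \<omega> \<and> take j (snd \<omega>') = take j (snd \<omega>)}"

definition GU :: "nat \<Rightarrow> nat \<Rightarrow> ('x \<times> nat) pmf \<Rightarrow> nat \<Rightarrow> 'x list \<times> nat list \<Rightarrow> real" where
  "GU p n q j \<omega> = measure_pmf.prob (XU_pmf p n q) {\<omega>'. take j (snd \<omega>') = take j (snd \<omega>)}"

lemma pmf_condl:
  assumes "b \<in> set_pmf (map_pmf snd J)"
  shows "pmf (condl d J b) a = pmf J (a, b) / pmf (map_pmf snd J) b"
proof -
  let ?A = "{ab. snd ab = b}"
  have ne: "set_pmf J \<inter> ?A \<noteq> {}" using assms by auto
  have mA: "measure_pmf.prob J ?A = pmf (map_pmf snd J) b"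
    by (simp add: pmf_map vimage_def)
  have "pmf (condl d J b) a = measure_pmf.prob (cond_pmf J ?A) (fst -` {a})"
    using assms by (simp add: condl_def pmf_map)
  also have "\<dots> = measure_pmf.prob (cond_pmf J ?A) (fst -` {a} \<inter> set_pmf (cond_pmf J ?A))"
    by (simp add: measure_Int_set_pmf)
  also have "fst -` {a} \<inter> set_pmf (cond_pmf J ?A) = {(a,b)} \<inter> set_pmf (cond_pmf J ?A)"
    using ne by (auto simp: set_cond_pmf)
  also have "measure_pmf.prob (cond_pmf J ?A) \<dots> = pmf (cond_pmf J ?A) (a, b)"
    by (simp add: measure_Int_set_pmf measure_pmf_single)
  also have "\<dots> = pmf J (a, b) / pmf (map_pmf snd J) b"
    using ne by (simp add: pmf_cond mA)
  finally show ?thesis .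
qed

lemma measure_eq_supp:
  assumes h: "A \<inter> set_pmf M = B \<inter> set_pmf M"
  shows "measure_pmf.prob M A = measure_pmf.prob M B"
proof -
  have "measure_pmf.prob M A = measure_pmf.prob M (A \<inter> set_pmf M)" by (simp add: measure_Int_set_pmf)
  also have "\<dots> = measure_pmf.prob M (B \<inter> set_pmf M)" using h by simp
  also have "\<dots> = measure_pmf.prob M B" by (simp add: measure_Int_set_pmf)
  finally show ?thesis .
qed

lemma take_Suc_eqD: "take (Suc j) b = take (Suc j) c \<Longrightarrow> take j b = take j c"
proof -
  assume "take (Suc j) b = take (Suc j) c"
  then have "take j (take (Suc j) b) = take j (take (Suc j) c)" by simp
  then show ?thesis by simp
qed

context
  fixes p n :: nat and q :: "('x::finite \<times> nat) pmf"
  assumes p: "0 < p" and q: "set_pmf q \<subseteq> UNIV \<times> {..<p}"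
begin

lemma set_Q: "\<omega> \<in> set_pmf (XU_pmf p n q) \<Longrightarrow> length (fst \<omega>) = 2^n \<and> snd \<omega> \<in> VL p (2^n)"
  unfolding XU_pmf_def using polar_VL[OF p] by (auto simp: set_replicate_pmf)

lemma finite_q: "finite (set_pmf q)"
  by (rule finite_subset[OF q]) simp

lemma finite_R: "finite (set_pmf (replicate_pmf (2^n) q))"
proof -
  have "set_pmf (replicate_pmf (2^n) q) \<subseteq> {xs. set xs \<subseteq> set_pmf q \<and> length xs = 2^n}"
    by (auto simp: set_replicate_pmf)
  moreover have "finite {xs. set xs \<subseteq> set_pmf q \<and> length xs = 2^n}"
    by (rule finite_lists_length_eq[OF finite_q])
  ultimately show ?thesis by (rule finite_subset)
qed

lemma finite_Q: "finite (set_pmf (XU_pmf p n q))"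
  unfolding XU_pmf_def by (simp add: finite_R)

lemma fst_Q: "map_pmf fst (XU_pmf p n q) = PX n q"
  unfolding XU_pmf_def PX_def by (simp add: map_pmf_comp map_replicate_pmf[symmetric])

lemma pmf_JUX:
  assumes "\<omega> \<in> set_pmf (XU_pmf p n q)" "j < 2^n"
  shows "pmf (JUX p n q j) (snd \<omega> ! j, (take j (snd \<omega>), fst \<omega>)) = G p n q (Suc j) \<omega>"
proof -
  let ?Q = "XU_pmf p n q"
  let ?A = "(\<lambda>(x, u). (u ! j, take j u, x)) -` {(snd \<omega> ! j, (take j (snd \<omega>), fst \<omega>))}"
  let ?B = "{\<omega>'. fst \<omega>' = fst \<omega> \<and> take (Suc j) (snd \<omega>') = take (Suc j) (snd \<omega>)}"
  have lw: "length (snd \<omega>) = 2^n" using set_Q[OF assms(1)] by (simp add: VL_def)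
  have seteq: "?A \<inter> set_pmf ?Q = ?B \<inter> set_pmf ?Q"
  proof (intro set_eqI iffI)
    fix \<omega>' assume "\<omega>' \<in> ?A \<inter> set_pmf ?Q"
    moreover have "length (snd \<omega>') = 2^n" using \<open>\<omega>' \<in> ?A \<inter> set_pmf ?Q\<close> set_Q by (auto simp: VL_def)
    ultimately show "\<omega>' \<in> ?B \<inter> set_pmf ?Q" using assms(2) lw
      by (auto simp: take_Suc_conv_app_nth case_prod_beta)
  next
    fix \<omega>' assume "\<omega>' \<in> ?B \<inter> set_pmf ?Q"
    moreover have "length (snd \<omega>') = 2^n" using \<open>\<omega>' \<in> ?B \<inter> set_pmf ?Q\<close> set_Q by (auto simp: VL_def)
    ultimately show "\<omega>' \<in> ?A \<inter> set_pmf ?Q" using assms(2) lw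
      by (auto simp: take_Suc_conv_app_nth case_prod_beta)
  qed
  then have "measure_pmf.prob ?Q ?A = measure_pmf.prob ?Q ?B"
    by (rule measure_eq_supp)
  then show ?thesis by (simp add: JUX_def pmf_map G_def)
qed

lemma pmf_JUX_snd: "pmf (map_pmf snd (JUX p n q j)) (take j (snd \<omega>), fst \<omega>) = G p n q j \<omega>"
  unfolding JUX_def G_def map_pmf_comp pmf_map
  by (intro arg_cong[where f="measure_pmf.prob _"]) auto

lemma pmf_JU:
  assumes "\<omega> \<in> set_pmf (XU_pmf p n q)" "j < 2^n"
  shows "pmf (JU p n q j) (snd \<omega> ! j, take j (snd \<omega>)) = GU p n q (Suc j) \<omega>"
proof -
  let ?Q = "XU_pmf p n q"
  let ?A = "(\<lambda>(x, u). (u ! j, take j u)) -` {(snd \<omega> ! j, take j (snd \<omega>))}"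
  let ?B = "{\<omega>'. take (Suc j) (snd \<omega>') = take (Suc j) (snd \<omega>)}"
  have lw: "length (snd \<omega>) = 2^n" using set_Q[OF assms(1)] by (simp add: VL_def)
  have seteq: "?A \<inter> set_pmf ?Q = ?B \<inter> set_pmf ?Q"
  proof (intro set_eqI iffI)
    fix \<omega>' assume "\<omega>' \<in> ?A \<inter> set_pmf ?Q"
    moreover have "length (snd \<omega>') = 2^n" using \<open>\<omega>' \<in> ?A \<inter> set_pmf ?Q\<close> set_Q by (auto simp: VL_def)
    ultimately show "\<omega>' \<in> ?B \<inter> set_pmf ?Q" using assms(2) lw
      by (auto simp: take_Suc_conv_app_nth case_prod_beta)
  next
    fix \<omega>' assume "\<omega>' \<in> ?B \<inter> set_pmf ?Q"
    moreover have "length (snd \<omega>') = 2^n" using \<open>\<omega>' \<in> ?B \<inter> set_pmf ?Q\<close> set_Q by (auto simp: VL_def)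
    ultimately show "\<omega>' \<in> ?A \<inter> set_pmf ?Q" using assms(2) lw
      by (auto simp: take_Suc_conv_app_nth case_prod_beta)
  qed
  then have "measure_pmf.prob ?Q ?A = measure_pmf.prob ?Q ?B"
    by (rule measure_eq_supp)
  then show ?thesis by (simp add: JU_def pmf_map GU_def)
qed

lemma pmf_JU_snd: "pmf (map_pmf snd (JU p n q j)) (take j (snd \<omega>)) = GU p n q j \<omega>"
  unfolding JU_def GU_def map_pmf_comp pmf_map
  by (intro arg_cong[where f="measure_pmf.prob _"]) auto

lemma G0: "G p n q 0 \<omega> = pmf (PX n q) (fst \<omega>)"
  unfolding G_def fst_Q[symmetric] pmf_map by (intro arg_cong[where f="measure_pmf.prob _"]) auto

lemma GN:
  assumes "\<omega> \<in> set_pmf (XU_pmf p n q)"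
  shows "G p n q (2^n) \<omega> = pmf (XU_pmf p n q) \<omega>"
proof -
  let ?Q = "XU_pmf p n q"
  let ?B = "{\<omega>'. fst \<omega>' = fst \<omega> \<and> take (2^n) (snd \<omega>') = take (2^n) (snd \<omega>)}"
  have seteq: "?B \<inter> set_pmf ?Q = {\<omega>} \<inter> set_pmf ?Q"
    using set_Q[OF assms] set_Q by (auto simp: VL_def prod_eq_iff)
  then have "measure_pmf.prob ?Q ?B = measure_pmf.prob ?Q {\<omega>}"
    by (rule measure_eq_supp)
  then show ?thesis by (simp add: G_def measure_pmf_single)
qed

lemma G_ge: "pmf (XU_pmf p n q) \<omega> \<le> G p n q j \<omega>"
  unfolding G_def measure_pmf_single[symmetric]
  by (rule measure_pmf.finite_measure_mono) auto

lemma GU_ge: "pmf (XU_pmf p n q) \<omega> \<le> GU p n q j \<omega>"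
  unfolding GU_def measure_pmf_single[symmetric]
  by (rule measure_pmf.finite_measure_mono) auto

lemma G_mono: "G p n q (Suc j) \<omega> \<le> G p n q j \<omega>"
  unfolding G_def
  by (rule measure_pmf.finite_measure_mono) (auto dest: take_Suc_eqD)

lemma Q_pos: "\<omega> \<in> set_pmf (XU_pmf p n q) \<Longrightarrow> 0 < pmf (XU_pmf p n q) \<omega>"
  by (simp add: pmf_positive)

lemma Kn_H:
  assumes "\<omega> \<in> set_pmf (XU_pmf p n q)" "j < 2^n" "j \<in> H_Y p n q \<beta>"
  shows "pmf (Kn p n q \<beta> (fst \<omega>) (take j (snd \<omega>)) j) (snd \<omega> ! j) = G p n q (Suc j) \<omega> / G p n q j \<omega>"
proof -
  have "0 < pmf (map_pmf snd (JUX p n q j)) (take j (snd \<omega>), fst \<omega>)"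
    unfolding pmf_JUX_snd using Q_pos[OF assms(1)] G_ge[of \<omega> j] by linarith
  then have "(take j (snd \<omega>), fst \<omega>) \<in> set_pmf (map_pmf snd (JUX p n q j))"
    unfolding set_pmf_iff by simp
  then show ?thesis using assms
    by (simp add: Kn_def pmf_condl pmf_JUX pmf_JUX_snd)
qed

lemma Kn_nH:
  assumes "\<omega> \<in> set_pmf (XU_pmf p n q)" "j < 2^n" "j \<notin> H_Y p n q \<beta>"
  shows "pmf (Kn p n q \<beta> (fst \<omega>) (take j (snd \<omega>)) j) (snd \<omega> ! j) = GU p n q (Suc j) \<omega> / GU p n q j \<omega>"
proof -
  have "0 < pmf (map_pmf snd (JU p n q j)) (take j (snd \<omega>))"
    unfolding pmf_JU_snd using Q_pos[OF assms(1)] GU_ge[of \<omega> j] by linarith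
  then have "take j (snd \<omega>) \<in> set_pmf (map_pmf snd (JU p n q j))"
    unfolding set_pmf_iff by simp
  then show ?thesis using assms
    by (simp add: Kn_def pmf_condl pmf_JU pmf_JU_snd)
qed

end


context
  fixes p n :: nat and q :: "('x::finite \<times> nat) pmf" and \<beta> :: real
  assumes p: "0 < p" and q: "set_pmf q \<subseteq> UNIV \<times> {..<p}"
begin

definition Dl :: "nat \<Rightarrow> 'x list \<times> nat list \<Rightarrow> real" where
  "Dl j \<omega> = ln (G p n q (Suc j) \<omega>) - ln (G p n q j \<omega>)"

definition DUl :: "nat \<Rightarrow> 'x list \<times> nat list \<Rightarrow> real" where
  "DUl j \<omega> = ln (GU p n q (Suc j) \<omega>) - ln (GU p n q j \<omega>)"

definition kk :: "nat \<Rightarrow> 'x list \<times> nat list \<Rightarrow> real" where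
  "kk j \<omega> = pmf (Kn p n q \<beta> (fst \<omega>) (take j (snd \<omega>)) j) (snd \<omega> ! j)"

definition tt :: "nat \<Rightarrow> 'x list \<times> nat list \<Rightarrow> real" where
  "tt j \<omega> = Dl j \<omega> + (if j \<in> V_YX p n q \<beta> then ln (real p) else - ln (kk j \<omega>))"

lemma G_pos: assumes "\<omega> \<in> set_pmf (XU_pmf p n q)" shows "0 < G p n q j \<omega>"
  using Q_pos[OF p q assms] G_ge[OF p q, where n=n and \<omega>=\<omega> and j=j] by linarith

lemma GU_pos: assumes "\<omega> \<in> set_pmf (XU_pmf p n q)" shows "0 < GU p n q j \<omega>"
  using Q_pos[OF p q assms] GU_ge[OF p q, where n=n and \<omega>=\<omega> and j=j] by linarith

lemma kk_pos_ln:
  assumes "\<omega> \<in> set_pmf (XU_pmf p n q)" "j < 2^n"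
  shows "0 < kk j \<omega> \<and> ln (kk j \<omega>) = (if j \<in> H_Y p n q \<beta> then Dl j \<omega> else DUl j \<omega>)"
proof (cases "j \<in> H_Y p n q \<beta>")
  case True
  then have "kk j \<omega> = G p n q (Suc j) \<omega> / G p n q j \<omega>"
    unfolding kk_def by (rule Kn_H[OF p q assms])
  then show ?thesis using True G_pos[OF assms(1), of j] G_pos[OF assms(1), of "Suc j"]
    by (simp add: Dl_def ln_div)
next
  case False
  then have "kk j \<omega> = GU p n q (Suc j) \<omega> / GU p n q j \<omega>"
    unfolding kk_def by (rule Kn_nH[OF p q assms])
  then show ?thesis using False GU_pos[OF assms(1), of j] GU_pos[OF assms(1), of "Suc j"]
    by (simp add: DUl_def ln_div)
qed

lemma ln3: "0 < (a::real) \<Longrightarrow> 0 < b \<Longrightarrow> 0 < c \<Longrightarrow> ln (a * b / c) = ln a + ln b - ln c"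
  by (simp add: ln_div ln_mult)

lemma Mu_pos_ln:
  assumes w: "\<omega> \<in> set_pmf (XU_pmf p n q)"
  shows "0 < pmf (Mu p n q \<beta>) \<omega> \<and>
    ln (pmf (Mu p n q \<beta>) \<omega>) = ln (G p n q 0 \<omega>) + (\<Sum>j\<in>{..<2^n} - V_YX p n q \<beta>. ln (kk j \<omega>))
       - real (card (V_YX p n q \<beta>)) * ln (real p)"
proof -
  obtain x u where xu: "\<omega> = (x, u)" by (cases \<omega>)
  have uVL: "u \<in> VL p (2^n)" using set_Q[OF p q w] xu by simp
  have lu: "length u = 2^n" using uVL by (simp add: VL_def)
  have uV: "\<forall>j\<in>V_YX p n q \<beta>. u ! j < p"
  proof
    fix j assume "j \<in> V_YX p n q \<beta>"
    then have "j < 2^n" using V_sub[of p n q \<beta>] by blast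
    then show "u ! j < p" by (rule VL_nth[OF uVL])
  qed
  have M: "pmf (Mu p n q \<beta>) \<omega> = G p n q 0 \<omega> * (\<Prod>j\<in>{..<2^n} - V_YX p n q \<beta>. kk j \<omega>) / real p ^ card (V_YX p n q \<beta>)"
    using pmf_Mu[OF p lu uV, of x] unfolding xu by (simp add: kk_def G0[OF p q])
  have kpos: "\<And>j. j \<in> {..<2^n} - V_YX p n q \<beta> \<Longrightarrow> 0 < kk j \<omega>"
    using kk_pos_ln[OF w] by auto
  have Ppos: "0 < (\<Prod>j\<in>{..<2^n} - V_YX p n q \<beta>. kk j \<omega>)"
    by (rule prod_pos) (use kpos in auto)
  have G0pos: "0 < G p n q 0 \<omega>" by (rule G_pos[OF w])
  have ppos: "0 < real p ^ card (V_YX p n q \<beta>)" using p by simp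
  have lnP: "ln (\<Prod>j\<in>{..<2^n} - V_YX p n q \<beta>. kk j \<omega>) = (\<Sum>j\<in>{..<2^n} - V_YX p n q \<beta>. ln (kk j \<omega>))"
    by (rule ln_prod) (use kpos in force)+
  have "ln (pmf (Mu p n q \<beta>) \<omega>) = ln (G p n q 0 \<omega>) + ln (\<Prod>j\<in>{..<2^n} - V_YX p n q \<beta>. kk j \<omega>) - ln (real p ^ card (V_YX p n q \<beta>))"
    unfolding M by (rule ln3[OF G0pos Ppos ppos])
  moreover have "0 < pmf (Mu p n q \<beta>) \<omega>" unfolding M using G0pos Ppos ppos by simp
  ultimately show ?thesis unfolding lnP ln_realpow by simp
qed

lemma ln_ratio:
  assumes w: "\<omega> \<in> set_pmf (XU_pmf p n q)"
  shows "ln (pmf (XU_pmf p n q) \<omega> / pmf (Mu p n q \<beta>) \<omega>) = (\<Sum>j<2^n. tt j \<omega>)"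
proof -
  let ?V = "V_YX p n q \<beta>"
  have Qpos: "0 < pmf (XU_pmf p n q) \<omega>" by (rule Q_pos[OF p q w])
  have Mpos: "0 < pmf (Mu p n q \<beta>) \<omega>" using Mu_pos_ln[OF w] by simp
  have tel: "ln (pmf (XU_pmf p n q) \<omega>) = ln (G p n q 0 \<omega>) + (\<Sum>j<2^n. Dl j \<omega>)"
    using sum_lessThan_telescope[of "\<lambda>j. ln (G p n q j \<omega>)" "2^n"] GN[OF p q w] by (simp add: Dl_def)
  have "(\<Sum>j<2^n. tt j \<omega>) = (\<Sum>j<2^n. Dl j \<omega>) + (\<Sum>j<2^n. if j \<in> ?V then ln (real p) else - ln (kk j \<omega>))"
    unfolding tt_def by (simp add: sum.distrib)
  also have "(\<Sum>j<2^n. if j \<in> ?V then ln (real p) else - ln (kk j \<omega>)) =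
      (\<Sum>j\<in>{..<2^n} \<inter> {j. j \<in> ?V}. ln (real p)) + (\<Sum>j\<in>{..<2^n} \<inter> - {j. j \<in> ?V}. - ln (kk j \<omega>))"
    by (rule sum.If_cases) simp
  also have "{..<2^n} \<inter> {j. j \<in> ?V} = ?V" using V_sub by blast
  also have "{..<2^n} \<inter> - {j. j \<in> ?V} = {..<2^n} - ?V" by blast
  finally have "(\<Sum>j<2^n. tt j \<omega>) = (\<Sum>j<2^n. Dl j \<omega>) + real (card ?V) * ln (real p)
       - (\<Sum>j\<in>{..<2^n} - ?V. ln (kk j \<omega>))"
    by (simp add: sum_negf)
  then show ?thesis using Mu_pos_ln[OF w] Qpos Mpos tel
    by (simp add: ln_div)
qed

lemma sum_Q_eq: "(\<Sum>\<omega>\<in>set_pmf (XU_pmf p n q). pmf (XU_pmf p n q) \<omega>) = 1"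
  by (rule sum_pmf_eq_1[OF finite_Q[OF p q]]) simp

lemma sum_Dl:
  assumes j: "j < 2^n"
  shows "(\<Sum>\<omega>\<in>set_pmf (XU_pmf p n q). pmf (XU_pmf p n q) \<omega> * Dl j \<omega>) = - ln 2 * cond_entropy (JUX p n q j)"
proof -
  let ?Q = "XU_pmf p n q"
  let ?J = "JUX p n q j"
  let ?f = "\<lambda>(a, b). - log 2 (pmf ?J (a, b) / pmf (map_pmf snd ?J) b)"
  have "cond_entropy ?J = measure_pmf.expectation ?Q (\<lambda>\<omega>. ?f ((\<lambda>(x, u). (u ! j, take j u, x)) \<omega>))"
    unfolding cond_entropy_def JUX_def by simp
  also have "\<dots> = (\<Sum>\<omega>\<in>set_pmf ?Q. ?f ((\<lambda>(x, u). (u ! j, take j u, x)) \<omega>) * pmf ?Q \<omega>)"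
    by (rule integral_measure_pmf_real[OF finite_Q[OF p q]]) simp
  also have "\<dots> = (\<Sum>\<omega>\<in>set_pmf ?Q. - (pmf ?Q \<omega> * Dl j \<omega>) / ln 2)"
  proof (intro sum.cong refl)
    fix \<omega> assume w: "\<omega> \<in> set_pmf ?Q"
    have "?f ((\<lambda>(x, u). (u ! j, take j u, x)) \<omega>) = - log 2 (G p n q (Suc j) \<omega> / G p n q j \<omega>)"
      using pmf_JUX[OF p q w j] pmf_JUX_snd[OF p q, where j=j and \<omega>=\<omega> and n=n] by (simp add: case_prod_beta)
    also have "\<dots> = - Dl j \<omega> / ln 2"
      using G_pos[OF w, of j] G_pos[OF w, of "Suc j"] by (simp add: Dl_def log_def ln_div diff_divide_distrib)
    finally show "?f ((\<lambda>(x, u). (u ! j, take j u, x)) \<omega>) * pmf ?Q \<omega> = - (pmf ?Q \<omega> * Dl j \<omega>) / ln 2"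
      by simp
  qed
  also have "\<dots> = - (\<Sum>\<omega>\<in>set_pmf ?Q. pmf ?Q \<omega> * Dl j \<omega>) / ln 2"
    by (simp add: sum_divide_distrib sum_negf)
  finally show ?thesis by (simp add: field_simps)
qed

lemma sum_DUl:
  assumes j: "j < 2^n"
  shows "(\<Sum>\<omega>\<in>set_pmf (XU_pmf p n q). pmf (XU_pmf p n q) \<omega> * DUl j \<omega>) = - ln 2 * cond_entropy (JU p n q j)"
proof -
  let ?Q = "XU_pmf p n q"
  let ?J = "JU p n q j"
  let ?f = "\<lambda>(a, b). - log 2 (pmf ?J (a, b) / pmf (map_pmf snd ?J) b)"
  have "cond_entropy ?J = measure_pmf.expectation ?Q (\<lambda>\<omega>. ?f ((\<lambda>(x, u). (u ! j, take j u)) \<omega>))"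
    unfolding cond_entropy_def JU_def by simp
  also have "\<dots> = (\<Sum>\<omega>\<in>set_pmf ?Q. ?f ((\<lambda>(x, u). (u ! j, take j u)) \<omega>) * pmf ?Q \<omega>)"
    by (rule integral_measure_pmf_real[OF finite_Q[OF p q]]) simp
  also have "\<dots> = (\<Sum>\<omega>\<in>set_pmf ?Q. - (pmf ?Q \<omega> * DUl j \<omega>) / ln 2)"
  proof (intro sum.cong refl)
    fix \<omega> assume w: "\<omega> \<in> set_pmf ?Q"
    have "?f ((\<lambda>(x, u). (u ! j, take j u)) \<omega>) = - log 2 (GU p n q (Suc j) \<omega> / GU p n q j \<omega>)"
      using pmf_JU[OF p q w j] pmf_JU_snd[OF p q, where j=j and \<omega>=\<omega> and n=n] by (simp add: case_prod_beta)
    also have "\<dots> = - DUl j \<omega> / ln 2"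
      using GU_pos[OF w, of j] GU_pos[OF w, of "Suc j"] by (simp add: DUl_def log_def ln_div diff_divide_distrib)
    finally show "?f ((\<lambda>(x, u). (u ! j, take j u)) \<omega>) * pmf ?Q \<omega> = - (pmf ?Q \<omega> * DUl j \<omega>) / ln 2"
      by simp
  qed
  also have "\<dots> = - (\<Sum>\<omega>\<in>set_pmf ?Q. pmf ?Q \<omega> * DUl j \<omega>) / ln 2"
    by (simp add: sum_divide_distrib sum_negf)
  finally show ?thesis by (simp add: field_simps)
qed

lemma sum_Dl_le0: "(\<Sum>\<omega>\<in>set_pmf (XU_pmf p n q). pmf (XU_pmf p n q) \<omega> * Dl j \<omega>) \<le> 0"
proof (rule sum_nonpos)
  fix \<omega> assume w: "\<omega> \<in> set_pmf (XU_pmf p n q)"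
  have "Dl j \<omega> \<le> 0"
    using G_mono[OF p q, where j=j and \<omega>=\<omega> and n=n] G_pos[OF w, of "Suc j"] by (simp add: Dl_def)
  then show "pmf (XU_pmf p n q) \<omega> * Dl j \<omega> \<le> 0"
    by (simp add: mult_nonneg_nonpos)
qed

lemma sum_tt:
  assumes j: "j < 2^n"
  shows "(\<Sum>\<omega>\<in>set_pmf (XU_pmf p n q). pmf (XU_pmf p n q) \<omega> * tt j \<omega>) \<le> ln 2 * delta (2^n) \<beta>"
proof -
  let ?Q = "XU_pmf p n q"
  let ?S = "set_pmf ?Q"
  have dpos: "0 \<le> delta (2^n) \<beta>" by (simp add: delta_def)
  show ?thesis
  proof (cases "j \<in> V_YX p n q \<beta>")
    case True
    have "(\<Sum>\<omega>\<in>?S. pmf ?Q \<omega> * tt j \<omega>) = (\<Sum>\<omega>\<in>?S. pmf ?Q \<omega> * Dl j \<omega>) + (\<Sum>\<omega>\<in>?S. pmf ?Q \<omega>) * ln (real p)"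
      unfolding tt_def using True by (simp add: distrib_left sum.distrib sum_distrib_right)
    also have "\<dots> = - ln 2 * cond_entropy (JUX p n q j) + ln (real p)"
      by (simp add: sum_Dl[OF j] sum_Q_eq)
    also have "\<dots> \<le> ln 2 * delta (2^n) \<beta>"
    proof -
      have ce: "cond_entropy (JUX p n q j) > log 2 (real p) - delta (2^n) \<beta>"
        using True unfolding V_YX_def by blast
      have lp: "ln 2 * log 2 (real p) = ln (real p)" using p by (simp add: log_def)
      have "ln 2 * (log 2 (real p) - delta (2^n) \<beta>) < ln 2 * cond_entropy (JUX p n q j)"
        by (rule mult_strict_left_mono[OF ce]) simp
      then have "ln (real p) - ln 2 * delta (2^n) \<beta> < ln 2 * cond_entropy (JUX p n q j)"
        unfolding right_diff_distrib lp .
      then show ?thesis by linarith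
    qed
    finally show ?thesis .
  next
    case nV: False
    show ?thesis
    proof (cases "j \<in> H_Y p n q \<beta>")
      case True
      have "(\<Sum>\<omega>\<in>?S. pmf ?Q \<omega> * tt j \<omega>) = 0"
      proof (intro sum.neutral ballI)
        fix \<omega> assume w: "\<omega> \<in> ?S"
        have "tt j \<omega> = 0" using nV True kk_pos_ln[OF w j] by (simp add: tt_def)
        then show "pmf ?Q \<omega> * tt j \<omega> = 0" by simp
      qed
      then show ?thesis using dpos by simp
    next
      case False
      have "(\<Sum>\<omega>\<in>?S. pmf ?Q \<omega> * tt j \<omega>) = (\<Sum>\<omega>\<in>?S. pmf ?Q \<omega> * Dl j \<omega>) - (\<Sum>\<omega>\<in>?S. pmf ?Q \<omega> * DUl j \<omega>)"
      proof -
        have "(\<Sum>\<omega>\<in>?S. pmf ?Q \<omega> * tt j \<omega>) = (\<Sum>\<omega>\<in>?S. pmf ?Q \<omega> * Dl j \<omega> - pmf ?Q \<omega> * DUl j \<omega>)"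
        proof (intro sum.cong refl)
          fix \<omega> assume w: "\<omega> \<in> ?S"
          have "tt j \<omega> = Dl j \<omega> - DUl j \<omega>" using nV False kk_pos_ln[OF w j] by (simp add: tt_def)
          then show "pmf ?Q \<omega> * tt j \<omega> = pmf ?Q \<omega> * Dl j \<omega> - pmf ?Q \<omega> * DUl j \<omega>"
            by (simp add: right_diff_distrib)
        qed
        then show ?thesis by (simp add: sum_subtractf)
      qed
      also have "\<dots> \<le> 0 + ln 2 * cond_entropy (JU p n q j)"
        using sum_Dl_le0[of j] sum_DUl[OF j] by simp
      also have "\<dots> \<le> ln 2 * delta (2^n) \<beta>"
      proof -
        have "\<not> (j < 2^n \<and> cond_entropy (JU p n q j) > delta (2^n) \<beta>)" using False unfolding H_Y_def by blast
        then have "cond_entropy (JU p n q j) \<le> delta (2^n) \<beta>" using j by linarith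
        then show ?thesis by simp
      qed
      finally show ?thesis .
    qed
  qed
qed

lemma KL_bound:
  "(\<Sum>\<omega>\<in>set_pmf (XU_pmf p n q). pmf (XU_pmf p n q) \<omega> * ln (pmf (XU_pmf p n q) \<omega> / pmf (Mu p n q \<beta>) \<omega>))
     \<le> 2^n * (ln 2 * delta (2^n) \<beta>)"
proof -
  let ?Q = "XU_pmf p n q"
  let ?S = "set_pmf ?Q"
  have "(\<Sum>\<omega>\<in>?S. pmf ?Q \<omega> * ln (pmf ?Q \<omega> / pmf (Mu p n q \<beta>) \<omega>)) = (\<Sum>\<omega>\<in>?S. \<Sum>j<2^n. pmf ?Q \<omega> * tt j \<omega>)"
    by (intro sum.cong refl) (simp add: ln_ratio sum_distrib_left)
  also have "\<dots> = (\<Sum>j<2^n. \<Sum>\<omega>\<in>?S. pmf ?Q \<omega> * tt j \<omega>)"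
    by (rule sum.swap)
  also have "\<dots> \<le> (\<Sum>j<(2::nat)^n. ln 2 * delta (2^n) \<beta>)"
    by (rule sum_mono) (simp add: sum_tt)
  also have "\<dots> = 2^n * (ln 2 * delta (2^n) \<beta>)" by simp
  finally show ?thesis .
qed

end


lemma fid_alg:
  fixes a b :: real
  assumes "0 \<le> a" "a \<le> 1" "0 \<le> b" "b \<le> 1"
  shows "(sqrt (a * b) + sqrt ((1 - a) * (1 - b)))\<^sup>2 \<le> 1 - (a - b)\<^sup>2"
proof -
  define X where "X = a * (1 - a)"
  define Y where "Y = b * (1 - b)"
  define s where "s = sqrt (a * b)"
  define t where "t = sqrt ((1 - a) * (1 - b))"
  have X: "0 \<le> X" and Y: "0 \<le> Y" using assms by (simp_all add: X_def Y_def)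
  have s2: "s\<^sup>2 = a * b" using assms by (simp add: s_def)
  have t2: "t\<^sup>2 = (1 - a) * (1 - b)" using assms by (simp add: t_def)
  have "a * b * ((1 - a) * (1 - b)) = X * Y" unfolding X_def Y_def by algebra
  then have st: "s * t = sqrt (X * Y)" unfolding s_def t_def real_sqrt_mult[symmetric] by simp
  have am: "sqrt (X * Y) \<le> (X + Y) / 2" by (rule arith_geo_mean_sqrt[OF X Y])
  have am2: "2 * sqrt (X * Y) \<le> X + Y" using am by simp
  have "(s + t)\<^sup>2 = s\<^sup>2 + t\<^sup>2 + 2 * (s * t)" by (simp add: power2_sum mult.assoc)
  also have "\<dots> \<le> a * b + (1 - a) * (1 - b) + (X + Y)" unfolding s2 t2 st using am2 by (rule add_left_mono)
  also have "\<dots> = 1 - (a - b)\<^sup>2" unfolding X_def Y_def power2_eq_square by algebra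
  finally show ?thesis by (simp add: s_def t_def)
qed

lemma sum_sqrt_CS:
  fixes f g :: "'a \<Rightarrow> real"
  assumes f: "\<And>i. i \<in> I \<Longrightarrow> 0 \<le> f i" and g: "\<And>i. i \<in> I \<Longrightarrow> 0 \<le> g i"
  shows "(\<Sum>i\<in>I. sqrt (f i * g i)) \<le> sqrt (\<Sum>i\<in>I. f i) * sqrt (\<Sum>i\<in>I. g i)"
proof -
  have "(\<Sum>i\<in>I. sqrt (f i) * sqrt (g i))\<^sup>2 \<le> (\<Sum>i\<in>I. (sqrt (f i))\<^sup>2) * (\<Sum>i\<in>I. (sqrt (g i))\<^sup>2)"
    by (rule Cauchy_Schwarz_ineq_sum)
  also have "(\<Sum>i\<in>I. (sqrt (f i))\<^sup>2) = (\<Sum>i\<in>I. f i)"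
    by (rule sum.cong) (simp_all add: f)
  also have "(\<Sum>i\<in>I. (sqrt (g i))\<^sup>2) = (\<Sum>i\<in>I. g i)"
    by (rule sum.cong) (simp_all add: g)
  also have "(\<Sum>i\<in>I. sqrt (f i) * sqrt (g i)) = (\<Sum>i\<in>I. sqrt (f i * g i))"
    by (simp add: real_sqrt_mult)
  finally have "(\<Sum>i\<in>I. sqrt (f i * g i))\<^sup>2 \<le> (\<Sum>i\<in>I. f i) * (\<Sum>i\<in>I. g i)" .
  then have "(\<Sum>i\<in>I. sqrt (f i * g i)) \<le> sqrt ((\<Sum>i\<in>I. f i) * (\<Sum>i\<in>I. g i))"
    by (rule real_le_rsqrt)
  then show ?thesis by (simp add: real_sqrt_mult)
qed

lemma BH_bound:
  fixes Q M :: "'a pmf"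
  assumes fin: "finite (set_pmf Q)" and pos: "\<And>\<omega>. \<omega> \<in> set_pmf Q \<Longrightarrow> 0 < pmf M \<omega>"
  shows "measure_pmf.prob M B \<le> measure_pmf.prob Q B +
     sqrt (\<Sum>\<omega>\<in>set_pmf Q. pmf Q \<omega> * ln (pmf Q \<omega> / pmf M \<omega>))"
proof -
  let ?S = "set_pmf Q"
  define D where "D = (\<Sum>\<omega>\<in>?S. pmf Q \<omega> * ln (pmf Q \<omega> / pmf M \<omega>))"
  define BC where "BC = (\<Sum>\<omega>\<in>?S. sqrt (pmf Q \<omega> * pmf M \<omega>))"
  define a where "a = measure_pmf.prob Q B"
  define b where "b = measure_pmf.prob M B"
  have Qpos: "\<And>\<omega>. \<omega> \<in> ?S \<Longrightarrow> 0 < pmf Q \<omega>" by (simp add: pmf_positive)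
  have sumQ: "(\<Sum>\<omega>\<in>?S. pmf Q \<omega>) = 1" by (rule sum_pmf_eq_1[OF fin]) simp
  have BCpos: "0 < BC"
  proof -
    obtain \<omega> where w: "\<omega> \<in> ?S" using set_pmf_not_empty[of Q] by blast
    have "0 < sqrt (pmf Q \<omega> * pmf M \<omega>)" using Qpos[OF w] pos[OF w] by simp
    also have "\<dots> \<le> BC" unfolding BC_def
      by (rule member_le_sum[OF w _ fin]) simp
    finally show ?thesis .
  qed
  have lnBC: "- D / 2 \<le> ln BC"
  proof -
    have "(\<Sum>\<omega>\<in>?S. pmf Q \<omega> * ln (sqrt (pmf M \<omega> / pmf Q \<omega>) / BC)) \<le>
          (\<Sum>\<omega>\<in>?S. pmf Q \<omega> * (sqrt (pmf M \<omega> / pmf Q \<omega>) / BC - 1))"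
    proof (rule sum_mono)
      fix \<omega> assume w: "\<omega> \<in> ?S"
      have "0 < sqrt (pmf M \<omega> / pmf Q \<omega>) / BC" using Qpos[OF w] pos[OF w] BCpos by simp
      then have "ln (sqrt (pmf M \<omega> / pmf Q \<omega>) / BC) \<le> sqrt (pmf M \<omega> / pmf Q \<omega>) / BC - 1"
        by (rule ln_le_minus_one)
      then show "pmf Q \<omega> * ln (sqrt (pmf M \<omega> / pmf Q \<omega>) / BC) \<le> pmf Q \<omega> * (sqrt (pmf M \<omega> / pmf Q \<omega>) / BC - 1)"
        using Qpos[OF w] by (simp add: mult_left_mono)
    qed
    also have "\<dots> = (\<Sum>\<omega>\<in>?S. sqrt (pmf Q \<omega> * pmf M \<omega>) / BC - pmf Q \<omega>)"
    proof (intro sum.cong refl)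
      fix \<omega> assume w: "\<omega> \<in> ?S"
      have q: "0 < pmf Q \<omega>" by (rule Qpos[OF w])
      have "pmf Q \<omega> * sqrt (pmf M \<omega> / pmf Q \<omega>) = sqrt (pmf Q \<omega> * pmf M \<omega>)"
      proof -
        have "pmf Q \<omega> = sqrt (pmf Q \<omega>) * sqrt (pmf Q \<omega>)" using q by simp
        then have "pmf Q \<omega> * sqrt (pmf M \<omega> / pmf Q \<omega>) = sqrt (pmf Q \<omega>) * (sqrt (pmf Q \<omega>) * sqrt (pmf M \<omega> / pmf Q \<omega>))"
          by (metis mult.assoc)
        also have "sqrt (pmf Q \<omega>) * sqrt (pmf M \<omega> / pmf Q \<omega>) = sqrt (pmf M \<omega>)"
          using q by (simp add: real_sqrt_mult[symmetric])
        finally show ?thesis by (simp add: real_sqrt_mult)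
      qed
      then show "pmf Q \<omega> * (sqrt (pmf M \<omega> / pmf Q \<omega>) / BC - 1) = sqrt (pmf Q \<omega> * pmf M \<omega>) / BC - pmf Q \<omega>"
        by (simp add: right_diff_distrib)
    qed
    also have "\<dots> = BC / BC - 1"
      by (simp add: sum_subtractf sum_divide_distrib[symmetric] BC_def sumQ)
    also have "\<dots> = 0" using BCpos by simp
    finally have le0: "(\<Sum>\<omega>\<in>?S. pmf Q \<omega> * ln (sqrt (pmf M \<omega> / pmf Q \<omega>) / BC)) \<le> 0" .
    have "(\<Sum>\<omega>\<in>?S. pmf Q \<omega> * ln (sqrt (pmf M \<omega> / pmf Q \<omega>) / BC)) =
          (\<Sum>\<omega>\<in>?S. - (pmf Q \<omega> * ln (pmf Q \<omega> / pmf M \<omega>)) / 2 - pmf Q \<omega> * ln BC)"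
    proof (intro sum.cong refl)
      fix \<omega> assume w: "\<omega> \<in> ?S"
      have q: "0 < pmf Q \<omega>" and m: "0 < pmf M \<omega>" using Qpos[OF w] pos[OF w] by auto
      have "ln (sqrt (pmf M \<omega> / pmf Q \<omega>) / BC) = (ln (pmf M \<omega>) - ln (pmf Q \<omega>)) / 2 - ln BC"
        using q m BCpos by (simp add: ln_div ln_sqrt)
      moreover have "ln (pmf Q \<omega> / pmf M \<omega>) = ln (pmf Q \<omega>) - ln (pmf M \<omega>)"
        using q m by (simp add: ln_div)
      ultimately show "pmf Q \<omega> * ln (sqrt (pmf M \<omega> / pmf Q \<omega>) / BC) =
          - (pmf Q \<omega> * ln (pmf Q \<omega> / pmf M \<omega>)) / 2 - pmf Q \<omega> * ln BC"
        by (simp add: right_diff_distrib diff_divide_distrib)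
    qed
    also have "\<dots> = - D / 2 - ln BC"
      by (simp add: sum_subtractf sum_divide_distrib[symmetric] sum_negf D_def sum_distrib_right[symmetric] sumQ)
    finally show ?thesis using le0 by simp
  qed
  have BC2: "exp (- D) \<le> BC\<^sup>2"
  proof -
    have "exp (- D / 2) \<le> BC" using lnBC BCpos by (metis exp_ln exp_le_cancel_iff)
    then have "(exp (- D / 2))\<^sup>2 \<le> BC\<^sup>2" by (rule power_mono) simp
    also have "(exp (- D / 2))\<^sup>2 = exp (- D)" by (simp add: power2_eq_square exp_add[symmetric])
    finally show ?thesis .
  qed
  have fS: "finite (?S \<inter> B)" "finite (?S - B)" using fin by auto
  have sQB: "(\<Sum>\<omega>\<in>?S \<inter> B. pmf Q \<omega>) = a"
  proof -
    have "(\<Sum>\<omega>\<in>?S \<inter> B. pmf Q \<omega>) = measure_pmf.prob Q (?S \<inter> B)"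
      by (simp add: measure_measure_pmf_finite fS)
    also have "\<dots> = a" unfolding a_def by (metis Int_commute measure_Int_set_pmf)
    finally show ?thesis .
  qed
  have sQnB: "(\<Sum>\<omega>\<in>?S - B. pmf Q \<omega>) = 1 - a"
  proof -
    have "(\<Sum>\<omega>\<in>?S. pmf Q \<omega>) = (\<Sum>\<omega>\<in>?S \<inter> B. pmf Q \<omega>) + (\<Sum>\<omega>\<in>?S - B. pmf Q \<omega>)"
      using fin by (metis sum.Int_Diff)
    then show ?thesis using sumQ sQB by simp
  qed
  have sMB: "(\<Sum>\<omega>\<in>?S \<inter> B. pmf M \<omega>) \<le> b"
  proof -
    have "(\<Sum>\<omega>\<in>?S \<inter> B. pmf M \<omega>) = measure_pmf.prob M (?S \<inter> B)"
      by (simp add: measure_measure_pmf_finite fS)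
    also have "\<dots> \<le> b" unfolding b_def by (rule measure_pmf.finite_measure_mono) auto
    finally show ?thesis .
  qed
  have sMnB: "(\<Sum>\<omega>\<in>?S - B. pmf M \<omega>) \<le> 1 - b"
  proof -
    have "(\<Sum>\<omega>\<in>?S - B. pmf M \<omega>) = measure_pmf.prob M (?S - B)"
      by (simp add: measure_measure_pmf_finite fS)
    also have "\<dots> \<le> measure_pmf.prob M (UNIV - B)" by (rule measure_pmf.finite_measure_mono) auto
    also have "\<dots> = 1 - b" unfolding b_def using measure_pmf.prob_compl[of B M] by simp
    finally show ?thesis .
  qed
  have ab: "0 \<le> a" "a \<le> 1" "0 \<le> b" "b \<le> 1" unfolding a_def b_def by auto
  have BCle: "BC \<le> sqrt (a * b) + sqrt ((1 - a) * (1 - b))"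
  proof -
    have "BC = (\<Sum>\<omega>\<in>?S \<inter> B. sqrt (pmf Q \<omega> * pmf M \<omega>)) + (\<Sum>\<omega>\<in>?S - B. sqrt (pmf Q \<omega> * pmf M \<omega>))"
      unfolding BC_def using fin by (metis sum.Int_Diff)
    also have "\<dots> \<le> sqrt (\<Sum>\<omega>\<in>?S \<inter> B. pmf Q \<omega>) * sqrt (\<Sum>\<omega>\<in>?S \<inter> B. pmf M \<omega>) +
                   sqrt (\<Sum>\<omega>\<in>?S - B. pmf Q \<omega>) * sqrt (\<Sum>\<omega>\<in>?S - B. pmf M \<omega>)"
      by (intro add_mono sum_sqrt_CS) auto
    also have "\<dots> \<le> sqrt a * sqrt b + sqrt (1 - a) * sqrt (1 - b)"
      unfolding sQB sQnB
      using ab by (intro add_mono mult_left_mono real_sqrt_le_mono sMB sMnB) auto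
    also have "\<dots> = sqrt (a * b) + sqrt ((1 - a) * (1 - b))" by (simp add: real_sqrt_mult)
    finally show ?thesis .
  qed
  have "BC\<^sup>2 \<le> (sqrt (a * b) + sqrt ((1 - a) * (1 - b)))\<^sup>2"
    by (rule power_mono[OF BCle]) (use BCpos in simp)
  also have "\<dots> \<le> 1 - (a - b)\<^sup>2" by (rule fid_alg[OF ab])
  finally have "(b - a)\<^sup>2 \<le> 1 - exp (- D)" using BC2 by (simp add: power2_commute)
  also have "1 - exp (- D) \<le> D" using exp_ge_add_one_self[of "- D"] by simp
  finally have "b - a \<le> sqrt D" by (rule real_le_rsqrt)
  then show ?thesis unfolding a_def b_def D_def by simp
qed


lemma map_replicate_pmf': "map_pmf (map f) (replicate_pmf m r) = replicate_pmf m (map_pmf f r)"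
proof (induction m)
  case 0 then show ?case by simp
next
  case (Suc m)
  have "map_pmf (map f) (replicate_pmf (Suc m) r) =
        bind_pmf r (\<lambda>x. map_pmf (map f) (map_pmf ((#) x) (replicate_pmf m r)))"
    by (simp add: map_bind_pmf map_pmf_def[symmetric])
  also have "\<dots> = bind_pmf r (\<lambda>x. map_pmf ((#) (f x)) (map_pmf (map f) (replicate_pmf m r)))"
    by (simp add: map_pmf_comp)
  also have "\<dots> = replicate_pmf (Suc m) (map_pmf f r)"
    by (simp add: Suc.IH bind_map_pmf map_pmf_def[symmetric])
  finally show ?case .
qed

lemma hist_map:
  "hist (map fst xy) (map snd xy) ab = real (length (filter (\<lambda>z. z = ab) xy)) / real (length xy)"
proof -
  have "{l. l < length (map fst xy) \<and> (map fst xy ! l, map snd xy ! l) = ab} = {l. l < length xy \<and> xy ! l = ab}"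
    by auto
  then show ?thesis by (simp add: hist_def length_filter_conv_card)
qed

lemma map_bernoulli:
  "map_pmf (\<lambda>z. z = ab) q = bernoulli_pmf (pmf q ab)"
proof (rule pmf_eqI)
  fix b :: bool
  have pT: "pmf (map_pmf (\<lambda>z. z = ab) q) True = pmf q ab"
  proof -
    have "(\<lambda>z. z = ab) -` {True} = {ab}" by auto
    then show ?thesis by (simp add: pmf_map measure_pmf_single)
  qed
  have pF: "pmf (map_pmf (\<lambda>z. z = ab) q) False = 1 - pmf q ab"
  proof -
    have "(\<lambda>z. z = ab) -` {False} = UNIV - {ab}" by auto
    then show ?thesis using measure_pmf.prob_compl[of "{ab}" q] by (simp add: pmf_map measure_pmf_single)
  qed
  show "pmf (map_pmf (\<lambda>z. z = ab) q) b = pmf (bernoulli_pmf (pmf q ab)) b"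
    by (cases b) (simp_all add: pT pF pmf_le_1)
qed

lemma count_binomial:
  "map_pmf (\<lambda>xy. length (filter (\<lambda>z. z = ab) xy)) (replicate_pmf N q) = binomial_pmf N (pmf q ab)"
proof -
  have eq: "length (filter (\<lambda>z. z = ab) xy) = (length \<circ> filter id) (map (\<lambda>z. z = ab) xy)" for xy :: "'a list"
    by (simp add: filter_map o_def)
  have "map_pmf (\<lambda>xy. length (filter (\<lambda>z. z = ab) xy)) (replicate_pmf N q) =
        map_pmf (length \<circ> filter id) (map_pmf (map (\<lambda>z. z = ab)) (replicate_pmf N q))"
    unfolding map_pmf_comp by (simp only: eq)
  also have "\<dots> = map_pmf (length \<circ> filter id) (replicate_pmf N (bernoulli_pmf (pmf q ab)))"
    by (simp add: map_replicate_pmf' map_bernoulli)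
  also have "\<dots> = binomial_pmf N (pmf q ab)"
    by (rule binomial_pmf_altdef[symmetric]) (simp add: pmf_le_1)
  finally show ?thesis .
qed

lemma count_tail:
  assumes N: "0 < N" and t: "0 \<le> t"
  shows "measure_pmf.prob (replicate_pmf N q)
     {xy. t \<le> \<bar>real (length (filter (\<lambda>z. z = ab) xy)) / real N - pmf q ab\<bar>} \<le> 2 * exp (- 2 * real N * t\<^sup>2)"
proof -
  interpret binomial_distribution N "pmf q ab" by unfold_locales (simp add: pmf_le_1)
  have "measure_pmf.prob (replicate_pmf N q)
     {xy. t \<le> \<bar>real (length (filter (\<lambda>z. z = ab) xy)) / real N - pmf q ab\<bar>} =
     measure_pmf.prob (map_pmf (\<lambda>xy. length (filter (\<lambda>z. z = ab) xy)) (replicate_pmf N q))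
      {x. \<bar>real x / real N - pmf q ab\<bar> \<ge> t}"
    by (simp add: vimage_def)
  also have "\<dots> = measure_pmf.prob (binomial_pmf N (pmf q ab)) {x. \<bar>real x / real N - pmf q ab\<bar> \<ge> t}"
    by (simp only: count_binomial)
  also have "\<dots> \<le> 2 * exp (- 2 * real N * t\<^sup>2)"
    using prob_abs_ge'[OF N t] by simp
  finally show ?thesis .
qed


lemma tv_small:
  fixes q :: "('x::finite \<times> nat) pmf" and T :: "'x \<times> nat \<Rightarrow> real"
  assumes p: "0 < p" and small: "\<And>a b. b < p \<Longrightarrow> \<bar>pmf q (a, b) - T (a, b)\<bar> < t"
  shows "tv p q T < real CARD('x) * real p * t"
proof -
  have "tv p q T < (\<Sum>a\<in>(UNIV::'x set). \<Sum>b<p. t)"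
    unfolding tv_def
  proof (rule sum_strict_mono)
    fix a :: 'x
    show "(\<Sum>b<p. \<bar>pmf q (a, b) - T (a, b)\<bar>) < (\<Sum>b<p. t)"
      by (rule sum_strict_mono) (use p small in auto)
  qed auto
  then show ?thesis by simp
qed

lemma hoeff_block:
  fixes q :: "('x::finite \<times> nat) pmf"
  assumes p: "0 < p" and q: "set_pmf q \<subseteq> UNIV \<times> {..<p}" and e: "0 < \<epsilon>" and N: "0 < N"
  shows "measure_pmf.prob (replicate_pmf N q) {xy. tv p q (hist (map fst xy) (map snd xy)) > \<epsilon>}
    \<le> 2 * real CARD('x) * real p * exp (- (real N * \<epsilon>\<^sup>2) / (2 * (real CARD('x))\<^sup>2 * (real p)\<^sup>2))"
proof -
  define cx where "cx = real CARD('x)"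
  have cx: "1 \<le> cx" unfolding cx_def by simp
  define t where "t = \<epsilon> / (cx * real p)"
  have tpos: "0 < t" unfolding t_def using e cx p by simp
  let ?R = "replicate_pmf N q"
  let ?I = "(UNIV :: 'x set) \<times> {..<p}"
  let ?A = "\<lambda>ab. {xy. t \<le> \<bar>real (length (filter (\<lambda>z. z = ab) xy)) / real N - pmf q ab\<bar>}"
  let ?E = "{xy. tv p q (hist (map fst xy) (map snd xy)) > \<epsilon>}"
  have sub: "?E \<inter> set_pmf ?R \<subseteq> (\<Union>ab\<in>?I. ?A ab)"
  proof
    fix xy assume xy: "xy \<in> ?E \<inter> set_pmf ?R"
    then have len: "length xy = N" by (simp add: set_replicate_pmf)
    show "xy \<in> (\<Union>ab\<in>?I. ?A ab)"
    proof (rule ccontr)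
      assume "xy \<notin> (\<Union>ab\<in>?I. ?A ab)"
      then have sm: "\<And>a b. b < p \<Longrightarrow> \<bar>pmf q (a, b) - hist (map fst xy) (map snd xy) (a, b)\<bar> < t"
        by (auto simp: hist_map len abs_minus_commute not_le)
      have "tv p q (hist (map fst xy) (map snd xy)) < cx * real p * t"
        unfolding cx_def by (rule tv_small[OF p sm])
      also have "\<dots> = \<epsilon>" unfolding t_def using cx p by simp
      finally show False using xy by simp
    qed
  qed
  have "measure_pmf.prob ?R ?E = measure_pmf.prob ?R (?E \<inter> set_pmf ?R)"
    by (simp add: measure_Int_set_pmf)
  also have "\<dots> \<le> measure_pmf.prob ?R (\<Union>ab\<in>?I. ?A ab)"
    by (rule measure_pmf.finite_measure_mono[OF sub]) simp
  also have "\<dots> \<le> (\<Sum>ab\<in>?I. measure_pmf.prob ?R (?A ab))"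
    by (rule measure_pmf.finite_measure_subadditive_finite) auto
  also have "\<dots> \<le> (\<Sum>ab\<in>?I. 2 * exp (- 2 * real N * t\<^sup>2))"
    by (rule sum_mono) (rule count_tail[OF N], use tpos in simp)
  also have "\<dots> = cx * real p * (2 * exp (- 2 * real N * t\<^sup>2))"
    by (simp add: cx_def card_cartesian_product)
  also have "\<dots> \<le> cx * real p * (2 * exp (- (real N * \<epsilon>\<^sup>2) / (2 * cx\<^sup>2 * (real p)\<^sup>2)))"
  proof -
    have "- 2 * real N * t\<^sup>2 = - (real N * \<epsilon>\<^sup>2) / (cx\<^sup>2 * (real p)\<^sup>2) * 2"
      unfolding t_def using cx p by (simp add: power_divide power_mult_distrib field_simps)
    also have "\<dots> \<le> - (real N * \<epsilon>\<^sup>2) / (2 * cx\<^sup>2 * (real p)\<^sup>2)"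
    proof -
      define z where "z = real N * \<epsilon>\<^sup>2 / (cx\<^sup>2 * (real p)\<^sup>2)"
      have z: "0 \<le> z" unfolding z_def by simp
      have e1: "- (real N * \<epsilon>\<^sup>2) / (2 * cx\<^sup>2 * (real p)\<^sup>2) = - (z / 2)"
        unfolding z_def by (simp add: field_simps)
      have e2: "- (real N * \<epsilon>\<^sup>2) / (cx\<^sup>2 * (real p)\<^sup>2) * 2 = - z * 2"
        unfolding z_def by simp
      show ?thesis unfolding e1 e2 using z by linarith
    qed
    finally have "exp (- 2 * real N * t\<^sup>2) \<le> exp (- (real N * \<epsilon>\<^sup>2) / (2 * cx\<^sup>2 * (real p)\<^sup>2))"
      by simp
    then show ?thesis using cx p by (intro mult_left_mono) simp_all
  qed
  finally show ?thesis unfolding cx_def by (simp add: mult.assoc)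
qed


lemma map_nth_replicate_pmf: "i < k \<Longrightarrow> map_pmf (\<lambda>bs. bs ! i) (replicate_pmf k r) = r"
proof (induction k arbitrary: i)
  case 0 then show ?case by simp
next
  case (Suc k)
  note IH = Suc.IH
  have ik: "i < Suc k" by (rule Suc.prems)
  show ?case
  proof (cases i)
    case 0
    then show ?thesis by (simp add: map_bind_pmf map_pmf_comp bind_return_pmf')
  next
    case (Suc i')
    then have "i' < k" using ik by simp
    then show ?thesis using Suc IH[of i'] by (simp add: map_bind_pmf map_pmf_comp flip: map_pmf_def)
  qed
qed

definition cntz :: "'a \<Rightarrow> 'a list \<Rightarrow> nat" where
  "cntz ab zs = length (filter (\<lambda>z. z = ab) zs)"

lemma hist_zip:
  assumes "length xs = length ys"
  shows "hist xs ys ab = real (cntz ab (zip xs ys)) / real (length xs)"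
proof -
  have "{l. l < length xs \<and> (xs ! l, ys ! l) = ab} = {l. l < length (zip xs ys) \<and> zip xs ys ! l = ab}"
    using assms by auto
  then show ?thesis by (simp add: hist_def cntz_def length_filter_conv_card)
qed

lemma concat_counts:
  assumes "\<forall>b\<in>set bs. length (fst b) = N \<and> length (snd b) = N"
  shows "length (concat (map fst bs)) = length bs * N \<and> length (concat (map snd bs)) = length bs * N \<and>
    cntz ab (zip (concat (map fst bs)) (concat (map snd bs))) = (\<Sum>b\<leftarrow>bs. cntz ab (zip (fst b) (snd b)))"
  using assms
proof (induction bs)
  case Nil then show ?case by (simp add: cntz_def)
next
  case (Cons b bs)
  then show ?case by (simp add: zip_append cntz_def)
qed

lemma tv_avg:
  fixes q :: "('x::finite \<times> nat) pmf"
  assumes k: "0 < k" and h: "\<And>i. i < k \<Longrightarrow> tv p q (h i) \<le> \<epsilon>"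
  shows "tv p q (\<lambda>ab. (\<Sum>i<k. h i ab) / real k) \<le> \<epsilon>"
proof -
  let ?F = "\<lambda>i a b. \<bar>pmf q (a, b) - h i (a, b)\<bar>"
  have "tv p q (\<lambda>ab. (\<Sum>i<k. h i ab) / real k) \<le>
        (\<Sum>a\<in>(UNIV::'x set). \<Sum>b<p. (\<Sum>i<k. ?F i a b) / real k)"
    unfolding tv_def
  proof (intro sum_mono)
    fix a b
    have s1: "(\<Sum>i<k. pmf q (a, b) - h i (a, b)) = real k * pmf q (a, b) - (\<Sum>i<k. h i (a, b))"
      by (simp add: sum_subtractf)
    have "pmf q (a, b) - (\<Sum>i<k. h i (a, b)) / real k = (\<Sum>i<k. pmf q (a, b) - h i (a, b)) / real k"
      unfolding s1 using k by (simp add: diff_divide_distrib)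
    then have "\<bar>pmf q (a, b) - (\<Sum>i<k. h i (a, b)) / real k\<bar> = \<bar>\<Sum>i<k. pmf q (a, b) - h i (a, b)\<bar> / real k"
      by simp
    also have "\<dots> \<le> (\<Sum>i<k. ?F i a b) / real k"
      by (intro divide_right_mono sum_abs) simp
    finally show "\<bar>pmf q (a, b) - (\<Sum>i<k. h i (a, b)) / real k\<bar> \<le> (\<Sum>i<k. ?F i a b) / real k" .
  qed
  also have "\<dots> = (\<Sum>a\<in>(UNIV::'x set). \<Sum>b<p. \<Sum>i<k. ?F i a b) / real k"
    by (simp only: sum_divide_distrib)
  also have "(\<Sum>a\<in>(UNIV::'x set). \<Sum>b<p. \<Sum>i<k. ?F i a b) = (\<Sum>a\<in>(UNIV::'x set). \<Sum>i<k. \<Sum>b<p. ?F i a b)"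
    by (rule sum.cong[OF refl], rule sum.swap)
  also have "\<dots> = (\<Sum>i<k. \<Sum>a\<in>(UNIV::'x set). \<Sum>b<p. ?F i a b)"
    by (rule sum.swap)
  also have "\<dots> = (\<Sum>i<k. tv p q (h i))"
    unfolding tv_def ..
  also have "(\<Sum>i<k. tv p q (h i)) / real k \<le> (\<Sum>i<k. \<epsilon>) / real k"
    by (intro divide_right_mono sum_mono h) simp_all
  also have "\<dots> = \<epsilon>" using k by simp
  finally show ?thesis .
qed

lemma hist_concat_tv:
  fixes q :: "('x::finite \<times> nat) pmf" and bs :: "('x list \<times> nat list) list"
  assumes len: "\<forall>b\<in>set bs. length (fst b) = N \<and> length (snd b) = N" and N: "0 < N" and k: "0 < length bs"
    and gt: "tv p q (hist (concat (map fst bs)) (concat (map snd bs))) > \<epsilon>"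
  shows "\<exists>i<length bs. tv p q (hist (fst (bs ! i)) (snd (bs ! i))) > \<epsilon>"
proof (rule ccontr)
  assume "\<not> ?thesis"
  then have le: "\<And>i. i < length bs \<Longrightarrow> tv p q (hist (fst (bs ! i)) (snd (bs ! i))) \<le> \<epsilon>" by auto
  let ?k = "length bs"
  have "hist (concat (map fst bs)) (concat (map snd bs)) = (\<lambda>ab. (\<Sum>i<?k. hist (fst (bs ! i)) (snd (bs ! i)) ab) / real ?k)"
  proof
    fix ab
    have cc: "length (concat (map fst bs)) = ?k * N" "length (concat (map snd bs)) = ?k * N"
      "cntz ab (zip (concat (map fst bs)) (concat (map snd bs))) = (\<Sum>b\<leftarrow>bs. cntz ab (zip (fst b) (snd b)))"
      using concat_counts[OF len, of ab] by auto
    have hi: "hist (fst (bs ! i)) (snd (bs ! i)) ab = real (cntz ab (zip (fst (bs ! i)) (snd (bs ! i)))) / real N"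
      if "i < ?k" for i
    proof -
      have "bs ! i \<in> set bs" using that by simp
      then have "length (fst (bs ! i)) = N" "length (snd (bs ! i)) = N" using len by auto
      then show ?thesis by (simp add: hist_zip)
    qed
    have "hist (concat (map fst bs)) (concat (map snd bs)) ab =
          real (\<Sum>b\<leftarrow>bs. cntz ab (zip (fst b) (snd b))) / real (?k * N)"
      using cc by (simp add: hist_zip)
    also have "(\<Sum>b\<leftarrow>bs. cntz ab (zip (fst b) (snd b))) = (\<Sum>i<?k. cntz ab (zip (fst (bs ! i)) (snd (bs ! i))))"
      by (simp add: sum_list_sum_nth atLeast0LessThan)
    also have "real (\<Sum>i<?k. cntz ab (zip (fst (bs ! i)) (snd (bs ! i)))) / real (?k * N) =
               (\<Sum>i<?k. real (cntz ab (zip (fst (bs ! i)) (snd (bs ! i)))) / real N) / real ?k"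
      using N k by (simp add: sum_divide_distrib[symmetric] field_simps)
    also have "\<dots> = (\<Sum>i<?k. hist (fst (bs ! i)) (snd (bs ! i)) ab) / real ?k"
      by (simp add: hi)
    finally show "hist (concat (map fst bs)) (concat (map snd bs)) ab = (\<Sum>i<?k. hist (fst (bs ! i)) (snd (bs ! i)) ab) / real ?k" .
  qed
  then have "tv p q (hist (concat (map fst bs)) (concat (map snd bs))) \<le> \<epsilon>"
    using tv_avg[OF k, of p q "\<lambda>i. hist (fst (bs ! i)) (snd (bs ! i))" \<epsilon>] le by simp
  then show False using gt by simp
qed


lemma set_condl:
  fixes p :: nat
  assumes p: "0 < p" and J: "set_pmf J \<subseteq> {..<p} \<times> UNIV"
  shows "set_pmf (condl (pmf_of_set {..<p}) J b) \<subseteq> {..<p}"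
proof (cases "b \<in> set_pmf (map_pmf snd J)")
  case True
  then have ne: "set_pmf J \<inter> {ab. snd ab = b} \<noteq> {}" by auto
  have "set_pmf (condl (pmf_of_set {..<p}) J b) = fst ` (set_pmf J \<inter> {ab. snd ab = b})"
    using True ne by (simp add: condl_def set_cond_pmf)
  also have "\<dots> \<subseteq> {..<p}" using J by auto
  finally show ?thesis .
next
  case False
  have "set_pmf (pmf_of_set {..<p}) = {..<p}" by (rule set_pmf_of_set) (use p in auto)
  then show ?thesis using False by (simp add: condl_def)
qed

context
  fixes p n :: nat and q :: "('x::finite \<times> nat) pmf" and \<beta> :: real
  assumes p: "0 < p" and q: "set_pmf q \<subseteq> UNIV \<times> {..<p}"
begin

lemma Q_nth: "\<omega> \<in> set_pmf (XU_pmf p n q) \<Longrightarrow> j < 2^n \<Longrightarrow> snd \<omega> ! j < p"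
  using set_Q[OF p q, where n=n and \<omega>=\<omega>] VL_nth by blast

lemma set_JUX: "j < 2^n \<Longrightarrow> set_pmf (JUX p n q j) \<subseteq> {..<p} \<times> UNIV"
  unfolding JUX_def using Q_nth by (auto simp: case_prod_beta)

lemma set_JU: "j < 2^n \<Longrightarrow> set_pmf (JU p n q j) \<subseteq> {..<p} \<times> UNIV"
  unfolding JU_def using Q_nth by (auto simp: case_prod_beta)

lemma set_Kd:
  assumes c: "c \<in> Cset p n q \<beta>" and j: "j < 2^n"
  shows "set_pmf (Kd p n q \<beta> c x pre j) \<subseteq> {..<p}"
proof (cases "j \<in> V_YX p n q \<beta>")
  case True
  then have "c j < p" using c unfolding Cset_def by (auto simp: PiE_iff)
  then show ?thesis using True by (simp add: Kd_def)
next
  case False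
  then show ?thesis unfolding Kd_def
    using set_condl[OF p set_JUX[OF j]] set_condl[OF p set_JU[OF j]] by simp
qed

lemma set_encode:
  assumes c: "c \<in> Cset p n q \<beta>" and m: "m \<le> 2^n" and u: "u \<in> set_pmf (encode p n q \<beta> c x m)"
  shows "u \<in> VL p m"
proof -
  have ne: "pmf (encode p n q \<beta> c x m) u \<noteq> 0" using u by (simp add: set_pmf_iff)
  then have lu: "length u = m" by (simp add: pmf_encode split: if_splits)
  then have pr: "(\<Prod>j<m. pmf (Kd p n q \<beta> c x (take j u) j) (u ! j)) \<noteq> 0"
    using ne by (simp add: pmf_encode)
  have "\<forall>j<m. u ! j < p"
  proof (intro allI impI)
    fix j assume jm: "j < m"
    have "pmf (Kd p n q \<beta> c x (take j u) j) (u ! j) \<noteq> 0" using pr jm by (simp add: prod_zero_iff)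
    then have "u ! j \<in> set_pmf (Kd p n q \<beta> c x (take j u) j)" by (simp add: set_pmf_iff)
    then show "u ! j < p" using set_Kd[OF c, of j] jm m by auto
  qed
  then show ?thesis using lu by (auto simp: VL_def in_set_conv_nth)
qed

lemma set_block:
  assumes c: "c \<in> Cset p n q \<beta>" and b: "b \<in> set_pmf (block p n q \<beta> c)"
  shows "length (fst b) = 2^n \<and> length (snd b) = 2^n"
proof -
  obtain x u where x: "x \<in> set_pmf (replicate_pmf (2^n) (map_pmf fst q))"
    and u: "u \<in> set_pmf (encode p n q \<beta> c x (2^n))" and b': "b = (x, polar_inv p n u)"
    using b unfolding block_def by auto
  have "u \<in> VL p (2^n)" by (rule set_encode[OF c _ u]) simp
  then have "polar_inv p n u \<in> VL p (2^n)" by (rule polar_inv_VL[OF p])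
  then show ?thesis using x b' by (simp add: VL_def set_replicate_pmf)
qed

lemma Mb_eq:
  "bind_pmf (pmf_of_set (Cset p n q \<beta>)) (block p n q \<beta>) =
   map_pmf (\<lambda>(x, u). (x, polar_inv p n u)) (Mu p n q \<beta>)"
  unfolding Mu_def block_def PX_def
  unfolding map_pmf_def by (simp add: bind_assoc_pmf bind_return_pmf)

lemma Q'_eq:
  "map_pmf (\<lambda>(x, u). (x, polar_inv p n u)) (XU_pmf p n q) =
   map_pmf (\<lambda>xy. (map fst xy, map snd xy)) (replicate_pmf (2^n) q)"
  unfolding XU_pmf_def map_pmf_comp
proof (rule map_pmf_cong[OF refl])
  fix xy assume xy: "xy \<in> set_pmf (replicate_pmf (2^n) q)"
  have "map snd xy \<in> VL p (2^n)"
    using xy q by (auto simp: VL_def set_replicate_pmf)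
  then show "(case (map fst xy, polar p n (map snd xy)) of (x, u) \<Rightarrow> (x, polar_inv p n u)) = (map fst xy, map snd xy)"
    by (simp add: polar_inv_polar)
qed

lemma block_bound:
  assumes e: "0 < \<epsilon>"
  shows "measure_pmf.prob (bind_pmf (pmf_of_set (Cset p n q \<beta>)) (block p n q \<beta>))
      {b. tv p q (hist (fst b) (snd b)) > \<epsilon>}
    \<le> sqrt (2 * ln 2) * sqrt (2^n * delta (2^n) \<beta>)
      + 2 * real CARD('x) * real p * exp (- (2^n * \<epsilon>\<^sup>2) / (2 * (real CARD('x))\<^sup>2 * (real p)\<^sup>2))"
proof -
  let ?g = "\<lambda>(x, u). (x, polar_inv p n u)"
  let ?A = "{b. tv p q (hist (fst b) (snd b)) > \<epsilon>}"
  let ?Q = "XU_pmf p n q"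
  let ?KL = "(\<Sum>\<omega>\<in>set_pmf ?Q. pmf ?Q \<omega> * ln (pmf ?Q \<omega> / pmf (Mu p n q \<beta>) \<omega>))"
  have "measure_pmf.prob (bind_pmf (pmf_of_set (Cset p n q \<beta>)) (block p n q \<beta>)) ?A =
        measure_pmf.prob (Mu p n q \<beta>) (?g -` ?A)"
    by (simp add: Mb_eq)
  also have "\<dots> \<le> measure_pmf.prob ?Q (?g -` ?A) + sqrt ?KL"
    by (rule BH_bound[OF finite_Q[OF p q]]) (use Mu_pos_ln[OF p q] in blast)
  also have "measure_pmf.prob ?Q (?g -` ?A) = measure_pmf.prob (map_pmf ?g ?Q) ?A" by simp
  also have "\<dots> = measure_pmf.prob (replicate_pmf (2^n) q) {xy. tv p q (hist (map fst xy) (map snd xy)) > \<epsilon>}"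
    by (simp add: Q'_eq vimage_def)
  also have "\<dots> \<le> 2 * real CARD('x) * real p * exp (- (real (2^n) * \<epsilon>\<^sup>2) / (2 * (real CARD('x))\<^sup>2 * (real p)\<^sup>2))"
    by (rule hoeff_block[OF p q e]) simp
  also have "sqrt ?KL \<le> sqrt (2 * ln 2) * sqrt (2^n * delta (2^n) \<beta>)"
  proof -
    have "?KL \<le> 2^n * (ln 2 * delta (2^n) \<beta>)" by (rule KL_bound[OF p q])
    also have "\<dots> \<le> (2 * ln 2) * (2^n * delta (2^n) \<beta>)"
      by (simp add: delta_def)
    finally show ?thesis by (simp add: real_sqrt_mult[symmetric])
  qed
  finally show ?thesis by simp
qed

end


lemma exp_le_f:
  fixes a \<beta> N :: real
  assumes a: "0 < a" and \<beta>: "0 < \<beta>" "\<beta> \<le> 1/2" and N: "1 \<le> N" and K: "ln 2 / (2 * a) \<le> sqrt N"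
  shows "exp (- (N * a)) \<le> sqrt (N * 2 powr (- (N powr \<beta>)))"
proof -
  have A: "N powr \<beta> \<le> sqrt N"
    using powr_mono[OF \<beta>(2) N] powr_half_sqrt[of N] N by simp
  have B: "2 powr (- sqrt N) \<le> 2 powr (- (N powr \<beta>))"
    by (rule powr_mono) (use A in auto)
  have C: "sqrt (2 powr (- sqrt N)) \<le> sqrt (N * 2 powr (- (N powr \<beta>)))"
  proof (rule real_sqrt_le_mono)
    have "1 * 2 powr (- (N powr \<beta>)) \<le> N * 2 powr (- (N powr \<beta>))"
      by (rule mult_right_mono) (use N in auto)
    then show "2 powr (- sqrt N) \<le> N * 2 powr (- (N powr \<beta>))" using B by linarith
  qed
  have E: "sqrt (2 powr (- sqrt N)) = exp ((- sqrt N / 2) * ln 2)"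
    using powr_half_sqrt_powr[of 2 "- sqrt N"] by (simp add: powr_def)
  have sN: "0 \<le> sqrt N" using N by simp
  have "ln 2 / 2 \<le> sqrt N * a" using K a by (simp add: field_simps)
  then have "sqrt N * (ln 2 / 2) \<le> sqrt N * (sqrt N * a)" by (rule mult_left_mono[OF _ sN])
  also have "sqrt N * (sqrt N * a) = N * a" using N by (simp add: mult.assoc[symmetric])
  finally have "(- sqrt N / 2) * ln 2 \<ge> - (N * a)" by simp
  then have "exp (- (N * a)) \<le> exp ((- sqrt N / 2) * ln 2)" by simp
  also have "\<dots> \<le> sqrt (N * 2 powr (- (N powr \<beta>)))" using C E by simp
  finally show ?thesis .
qed

lemma bigO_part:
  fixes cx p k :: nat and \<beta> \<epsilon> :: real
  assumes cx: "1 \<le> cx" and p: "0 < p" and \<beta>: "0 < \<beta>" "\<beta> < 1/2" and e: "0 < \<epsilon>"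
  shows "(\<lambda>m. bound_rhs cx p m \<beta> k \<epsilon>) \<in> O(\<lambda>m. real k * sqrt (2^m * delta (2^m) \<beta>))"
proof -
  define a where "a = \<epsilon>\<^sup>2 / (2 * (real cx)\<^sup>2 * (real p)\<^sup>2)"
  have a: "0 < a" unfolding a_def using cx p e by simp
  define K where "K = ln 2 / (2 * a)"
  define f where "f = (\<lambda>m::nat. sqrt (2^m * delta (2^m) \<beta>))"
  have ev: "eventually (\<lambda>m. K \<le> sqrt (2^m)) at_top"
    using eventually_ge_at_top[of "nat \<lceil>K\<^sup>2\<rceil>"]
  proof (rule eventually_mono)
    fix m :: nat assume m: "nat \<lceil>K\<^sup>2\<rceil> \<le> m"
    have "K\<^sup>2 \<le> real m" using m by linarith
    also have "real m \<le> 2^m"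
      using less_exp[of m] by (metis less_imp_le of_nat_le_iff of_nat_numeral of_nat_power)
    finally have "sqrt (K\<^sup>2) \<le> sqrt (2^m)" by (rule real_sqrt_le_mono)
    then show "K \<le> sqrt (2^m)" by simp
  qed
  have le: "eventually (\<lambda>m. norm (bound_rhs cx p m \<beta> k \<epsilon>) \<le>
      (sqrt (2 * ln 2) + 2 * real cx * real p) * norm (real k * f m)) at_top"
    using ev
  proof (rule eventually_mono)
    fix m :: nat assume Km: "K \<le> sqrt (2^m)"
    have ex: "exp (- (2^m * \<epsilon>\<^sup>2) / (2 * (real cx)\<^sup>2 * (real p)\<^sup>2)) \<le> f m"
    proof -
      have "exp (- (2^m * \<epsilon>\<^sup>2) / (2 * (real cx)\<^sup>2 * (real p)\<^sup>2)) = exp (- (2^m * a))"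
        unfolding a_def by (simp add: field_simps)
      also have "\<dots> \<le> sqrt (2^m * 2 powr (- ((2^m) powr \<beta>)))"
        by (rule exp_le_f[OF a \<beta>(1)]) (use \<beta> Km K_def in auto)
      also have "\<dots> = f m" unfolding f_def delta_def by simp
      finally show ?thesis .
    qed
    have fpos: "0 \<le> f m" unfolding f_def delta_def by simp
    have bpos: "0 \<le> bound_rhs cx p m \<beta> k \<epsilon>" unfolding bound_rhs_def delta_def by simp
    have "bound_rhs cx p m \<beta> k \<epsilon> = real k * (sqrt (2 * ln 2) * f m
        + 2 * real cx * real p * exp (- (2^m * \<epsilon>\<^sup>2) / (2 * (real cx)\<^sup>2 * (real p)\<^sup>2)))"
      unfolding bound_rhs_def f_def by simp
    also have "\<dots> \<le> real k * (sqrt (2 * ln 2) * f m + 2 * real cx * real p * f m)"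
      by (intro mult_left_mono add_left_mono ex) simp_all
    also have "\<dots> = (sqrt (2 * ln 2) + 2 * real cx * real p) * (real k * f m)"
      by (simp add: algebra_simps)
    finally show "norm (bound_rhs cx p m \<beta> k \<epsilon>) \<le> (sqrt (2 * ln 2) + 2 * real cx * real p) * norm (real k * f m)"
      using bpos fpos by simp
  qed
  have "(\<lambda>m. bound_rhs cx p m \<beta> k \<epsilon>) \<in> O(\<lambda>m. real k * f m)"
    by (rule bigoI[OF le])
  then show ?thesis unfolding f_def .
qed


theorem lemma8:
  fixes q :: "('x::finite \<times> nat) pmf" and p n k :: nat and \<beta> \<epsilon> :: real
  assumes "prime p"
    and "set_pmf q \<subseteq> UNIV \<times> {..<p}"
    and "0 < \<beta>" and "\<beta> < 1/2"
    and "k \<ge> 1"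
    and "\<epsilon> > 0"
  shows "(measure_pmf.prob (scheme p n q \<beta> k)
           {bs. tv p q (hist (concat (map fst bs)) (concat (map snd bs))) > \<epsilon>}
         \<le> bound_rhs CARD('x) p n \<beta> k \<epsilon>)
         \<and> (\<lambda>m. bound_rhs CARD('x) p m \<beta> k \<epsilon>)
           \<in> O(\<lambda>m. real k * sqrt (2^m * delta (2^m) \<beta>))"
proof
  have p: "0 < p" using assms(1) by (simp add: prime_gt_0_nat)
  have q: "set_pmf q \<subseteq> UNIV \<times> {..<p}" by (rule assms(2))
  have k: "0 < k" using assms(5) by simp
  have e: "0 < \<epsilon>" by (rule assms(6))
  have cx: "1 \<le> CARD('x)" using finite_UNIV_card_ge_0[where 'a='x] by simp
  show "(\<lambda>m. bound_rhs CARD('x) p m \<beta> k \<epsilon>) \<in> O(\<lambda>m. real k * sqrt (2^m * delta (2^m) \<beta>))"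
    by (rule bigO_part[OF cx p assms(3,4) e])
  let ?C = "Cset p n q \<beta>"
  let ?S = "scheme p n q \<beta> k"
  let ?Mb = "bind_pmf (pmf_of_set ?C) (block p n q \<beta>)"
  let ?A = "{b. tv p q (hist (fst b) (snd b)) > \<epsilon>}"
  let ?E = "{bs. tv p q (hist (concat (map fst bs)) (concat (map snd bs))) > \<epsilon>}"
  have Sdef: "?S = bind_pmf (pmf_of_set ?C) (\<lambda>c. replicate_pmf k (block p n q \<beta> c))"
    by (simp add: scheme_def Cset_def)
  have setC: "set_pmf (pmf_of_set ?C) = ?C"
    by (rule set_pmf_of_set[OF Cset_ne[OF p] finite_Cset])
  have supp: "length bs = k \<and> (\<forall>b\<in>set bs. length (fst b) = 2^n \<and> length (snd b) = 2^n)"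
    if bs: "bs \<in> set_pmf ?S" for bs
  proof -
    obtain c where c: "c \<in> ?C" and bs': "bs \<in> set_pmf (replicate_pmf k (block p n q \<beta> c))"
      using bs setC unfolding Sdef by auto
    then have "length bs = k" and "\<forall>b\<in>set bs. b \<in> set_pmf (block p n q \<beta> c)"
      by (auto simp: set_replicate_pmf)
    then show ?thesis using set_block[OF p q c] by auto
  qed
  have sub: "?E \<inter> set_pmf ?S \<subseteq> (\<Union>i\<in>{..<k}. (\<lambda>bs. bs ! i) -` ?A)"
  proof
    fix bs assume bs: "bs \<in> ?E \<inter> set_pmf ?S"
    then have s: "length bs = k" "\<forall>b\<in>set bs. length (fst b) = 2^n \<and> length (snd b) = 2^n"
      using supp by auto
    have "\<exists>i<length bs. tv p q (hist (fst (bs ! i)) (snd (bs ! i))) > \<epsilon>"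
      by (rule hist_concat_tv[OF s(2)]) (use bs s k in auto)
    then show "bs \<in> (\<Union>i\<in>{..<k}. (\<lambda>bs. bs ! i) -` ?A)" using s by auto
  qed
  have Fi: "measure_pmf.prob ?S ((\<lambda>bs. bs ! i) -` ?A) = measure_pmf.prob ?Mb ?A" if i: "i < k" for i
  proof -
    have "map_pmf (\<lambda>bs. bs ! i) ?S = ?Mb"
      unfolding Sdef map_bind_pmf using i by (simp add: map_nth_replicate_pmf)
    then show ?thesis by (metis measure_map_pmf)
  qed
  have "measure_pmf.prob ?S ?E = measure_pmf.prob ?S (?E \<inter> set_pmf ?S)"
    by (simp add: measure_Int_set_pmf)
  also have "\<dots> \<le> measure_pmf.prob ?S (\<Union>i\<in>{..<k}. (\<lambda>bs. bs ! i) -` ?A)"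
    by (rule measure_pmf.finite_measure_mono[OF sub]) simp
  also have "\<dots> \<le> (\<Sum>i<k. measure_pmf.prob ?S ((\<lambda>bs. bs ! i) -` ?A))"
    by (rule measure_pmf.finite_measure_subadditive_finite) auto
  also have "\<dots> = (\<Sum>i<k. measure_pmf.prob ?Mb ?A)"
    by (rule sum.cong[OF refl], rule Fi) simp
  also have "\<dots> = real k * measure_pmf.prob ?Mb ?A" by simp
  also have "\<dots> \<le> real k * (sqrt (2 * ln 2) * sqrt (2^n * delta (2^n) \<beta>)
      + 2 * real CARD('x) * real p * exp (- (2^n * \<epsilon>\<^sup>2) / (2 * (real CARD('x))\<^sup>2 * (real p)\<^sup>2)))"
    by (rule mult_left_mono[OF block_bound[OF p q e]]) simp
  also have "\<dots> = bound_rhs CARD('x) p n \<beta> k \<epsilon>" by (simp add: bound_rhs_def)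
  finally show "measure_pmf.prob ?S ?E \<le> bound_rhs CARD('x) p n \<beta> k \<epsilon>" .
qed


end
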